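(* Let $A$ be a separable $C^*$-algebra, let $p\in\{0,1,2,\dots\}$, and let $(H,\rho,F)$ be a $p$-graded Fredholm module over $A$, with multigrading operators $\varepsilon_1,\dots,\varepsilon_p$. Assume there exists a self-adjoint, odd-graded involution $E\colon H\to H$ (so $E=E^*$, $E^2=1$) which commutes with $\rho(a)$ for every $a\in A$ and with each $\varepsilon_j$, and which anticommutes with $F$ (i.e. $EF=-FE$). Then the class of $(H,\rho,F)$ is zero in the Kasparov $K$-homology group $K^{-p}(A)$.
   Context: Write $X\sim Y$ for equality of bounded operators modulo compact operators. A Fredholm module over $A$ is a triple $(H,\rho,F)$: a separable Hilbert space $H$, a representation $\rho\colon A\to\mathcal B(H)$ (possibly degenerate or zero), and a bounded operator $F$ with $(F^2-1)\rho(a)\sim0$, $(F-F^* )\rho(a)\sim0$, $F\rho(a)\sim\rho(a)F$ for all $a\in A$. It is $p$-graded if moreover $H=H^+\oplus H^-$ is $\mathbb Z/2$-graded with each $\rho(a)$ even and $F$ odd, and there are odd operators $\varepsilon_1,\dots,\varepsilon_p$ with $\varepsilon_j^*=-\varepsilon_j$, $\varepsilon_j^2=-1$, $\varepsilon_i\varepsilon_j+\varepsilon_j\varepsilon_i=0$ for $i\neq j$, each commuting with $F$ and with every $\rho(a)$. A unitary equivalence of $p$-graded modules is a grading-preserving unitary intertwining $\rho$, $F$ and the $\varepsilon_j$. Two $p$-graded modules $(H,\rho,F_0),(H,\rho,F_1)$ are operator homotopic if there is a norm-continuous path $F_t$, $t\in[0,1]$, with each $(H,\rho,F_t)$ a $p$-graded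 Fredholm module (same $H,\rho$, grading and $\varepsilon_j$). Direct sum is taken componentwise. $K^{-p}(A)$ is the abelian group generated by unitary equivalence classes $[x]$ of $p$-graded Fredholm modules subject to $[x_0]=[x_1]$ when $x_0,x_1$ are operator homotopic and $[x_0\oplus x_1]=[x_0]+[x_1]$. *)

theory Defs
  imports "HOL-Analysis.Analysis" "HOL-Library.Function_Algebras"
begin

text \<open>A C*-algebra is modelled as a type 'a that is a real Banach algebra (not necessarily
unital), together with a complex scalar multiplication scC extending the real one and an
involution st, subject to the usual axioms and the C*-identity.\<close>

definition cstar_algebra ::
  "(complex \<Rightarrow> 'a::{banach,real_normed_algebra} \<Rightarrow> 'a) \<Rightarrow> ('a \<Rightarrow> 'a) \<Rightarrow> bool" where
  "cstar_algebra scC st \<longleftrightarrow>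
     (\<forall>r x. scC (complex_of_real r) x = scaleR r x) \<and>
     (\<forall>c d x. scC (c * d) x = scC c (scC d x)) \<and>
     (\<forall>c d x. scC (c + d) x = scC c x + scC d x) \<and>
     (\<forall>c x y. scC c (x + y) = scC c x + scC c y) \<and>
     (\<forall>c x. norm (scC c x) = cmod c * norm x) \<and>
     (\<forall>c x y. scC c (x * y) = scC c x * y \<and> scC c (x * y) = x * scC c y) \<and>
     (\<forall>x. st (st x) = x) \<and>
     (\<forall>x y. st (x + y) = st x + st y) \<and>
     (\<forall>c x. st (scC c x) = scC (cnj c) (st x)) \<and>
     (\<forall>x y. st (x * y) = st y * st x) \<and>
     (\<forall>x. norm (st x * x) = (norm x)\<^sup>2)"

definition separable_set :: "'a::metric_space set \<Rightarrow> bool" where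
  "separable_set S \<longleftrightarrow> (\<exists>D. countable D \<and> D \<subseteq> S \<and> S \<subseteq> closure D)"

text \<open>Every separable Hilbert space is unitarily isomorphic to a closed subspace of l2(N);
since K-homology is generated by unitary equivalence classes, Hilbert spaces are taken
to be closed subspaces of l2(N). Operators are functions on sequences; only their values
on the relevant subspace H matter.\<close>

type_synonym cseq = "nat \<Rightarrow> complex"
type_synonym op = "cseq \<Rightarrow> cseq"

definition L2 :: "cseq set" where
  "L2 = {x. summable (\<lambda>n. (cmod (x n))\<^sup>2)}"

definition l2inner :: "cseq \<Rightarrow> cseq \<Rightarrow> complex" where
  "l2inner x y = (\<Sum>n. x n * cnj (y n))"

definition l2norm :: "cseq \<Rightarrow> real" where
  "l2norm x = sqrt (\<Sum>n. (cmod (x n))\<^sup>2)"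

definition csc :: "complex \<Rightarrow> cseq \<Rightarrow> cseq" where
  "csc c x = (\<lambda>n. c * x n)"

definition closed_subspace :: "cseq set \<Rightarrow> bool" where
  "closed_subspace H \<longleftrightarrow> H \<subseteq> L2 \<and> 0 \<in> H \<and>
     (\<forall>x\<in>H. \<forall>y\<in>H. x + y \<in> H) \<and> (\<forall>c. \<forall>x\<in>H. csc c x \<in> H) \<and>
     (\<forall>s y. (\<forall>n. s n \<in> H) \<and> y \<in> L2 \<and> (\<lambda>n. l2norm (s n - y)) \<longlonglongrightarrow> 0 \<longrightarrow> y \<in> H)"

definition bounded_on :: "cseq set \<Rightarrow> op \<Rightarrow> bool" where
  "bounded_on H T \<longleftrightarrow> (\<forall>x\<in>H. T x \<in> H) \<and>
     (\<forall>x\<in>H. \<forall>y\<in>H. T (x + y) = T x + T y) \<and>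
     (\<forall>c. \<forall>x\<in>H. T (csc c x) = csc c (T x)) \<and>
     (\<exists>C. \<forall>x\<in>H. l2norm (T x) \<le> C * l2norm x)"

definition adj :: "cseq set \<Rightarrow> op \<Rightarrow> op" where
  "adj H T = (\<lambda>y. THE z. z \<in> H \<and> (\<forall>x\<in>H. l2inner (T x) y = l2inner x z))"

definition compact_on :: "cseq set \<Rightarrow> op \<Rightarrow> bool" where
  "compact_on H T \<longleftrightarrow> (\<forall>s (B::real). (\<forall>n. s n \<in> H \<and> l2norm (s n) \<le> B) \<longrightarrow>
     (\<exists>(r::nat\<Rightarrow>nat) y. strict_mono r \<and> y \<in> H \<and> (\<lambda>n. l2norm (T (s (r n)) - y)) \<longlonglongrightarrow> 0))"

text \<open>Hs: Hilbert space; gam: grading operator (H+ = +1 eigenspace, H- = -1 eigenspace);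
rho: representation; Fop: the operator F; eps: multigrading operators eps_0..eps_(p-1).\<close>
record 'a fmod =
  Hs :: "cseq set"
  gam :: op
  rho :: "'a \<Rightarrow> op"
  Fop :: op
  eps :: "nat \<Rightarrow> op"

definition representation ::
  "(complex \<Rightarrow> 'a::{banach,real_normed_algebra} \<Rightarrow> 'a) \<Rightarrow> ('a \<Rightarrow> 'a) \<Rightarrow> cseq set \<Rightarrow> ('a \<Rightarrow> op) \<Rightarrow> bool" where
  "representation scC st H r \<longleftrightarrow>
     (\<forall>a. bounded_on H (r a)) \<and>
     (\<forall>a b. \<forall>x\<in>H. r (a + b) x = r a x + r b x) \<and>
     (\<forall>c a. \<forall>x\<in>H. r (scC c a) x = csc c (r a x)) \<and>
     (\<forall>a b. \<forall>x\<in>H. r (a * b) x = r a (r b x)) \<and>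
     (\<forall>a. \<forall>x\<in>H. r (st a) x = adj H (r a) x)"

definition pgraded_fmod ::
  "(complex \<Rightarrow> 'a::{banach,real_normed_algebra} \<Rightarrow> 'a) \<Rightarrow> ('a \<Rightarrow> 'a) \<Rightarrow> nat \<Rightarrow> 'a fmod \<Rightarrow> bool" where
  "pgraded_fmod scC st p m \<longleftrightarrow>
     (let H = Hs m; g = gam m; r = rho m; F = Fop m; e = eps m in
     closed_subspace H \<and>
     representation scC st H r \<and>
     bounded_on H F \<and>
     \<comment> \<open>grading\<close>
     bounded_on H g \<and> (\<forall>x\<in>H. g (g x) = x) \<and> (\<forall>x\<in>H. adj H g x = g x) \<and>
     (\<forall>a. \<forall>x\<in>H. g (r a x) = r a (g x)) \<and>
     (\<forall>x\<in>H. F (g x) = - g (F x)) \<and>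
     \<comment> \<open>Fredholm conditions modulo compacts\<close>
     (\<forall>a. compact_on H (\<lambda>x. F (F (r a x)) - r a x)) \<and>
     (\<forall>a. compact_on H (\<lambda>x. F (r a x) - adj H F (r a x))) \<and>
     (\<forall>a. compact_on H (\<lambda>x. F (r a x) - r a (F x))) \<and>
     \<comment> \<open>multigrading\<close>
     (\<forall>j<p. bounded_on H (e j) \<and>
        (\<forall>x\<in>H. e j (g x) = - g (e j x)) \<and>
        (\<forall>x\<in>H. adj H (e j) x = - e j x) \<and>
        (\<forall>x\<in>H. e j (e j x) = - x) \<and>
        (\<forall>i<p. i \<noteq> j \<longrightarrow> (\<forall>x\<in>H. e i (e j x) + e j (e i x) = 0)) \<and>
        (\<forall>x\<in>H. e j (F x) = F (e j x)) \<and>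
        (\<forall>a. \<forall>x\<in>H. e j (r a x) = r a (e j x))))"

definition unitarily_equiv :: "nat \<Rightarrow> 'a fmod \<Rightarrow> 'a fmod \<Rightarrow> bool" where
  "unitarily_equiv p m1 m2 \<longleftrightarrow> (\<exists>U.
     (\<forall>x\<in>Hs m1. \<forall>y\<in>Hs m1. U (x + y) = U x + U y) \<and>
     (\<forall>c. \<forall>x\<in>Hs m1. U (csc c x) = csc c (U x)) \<and>
     (\<forall>x\<in>Hs m1. l2norm (U x) = l2norm x) \<and>
     U ` Hs m1 = Hs m2 \<and>
     (\<forall>x\<in>Hs m1. U (gam m1 x) = gam m2 (U x)) \<and>
     (\<forall>a. \<forall>x\<in>Hs m1. U (rho m1 a x) = rho m2 a (U x)) \<and>
     (\<forall>x\<in>Hs m1. U (Fop m1 x) = Fop m2 (U x)) \<and>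
     (\<forall>j<p. \<forall>x\<in>Hs m1. U (eps m1 j x) = eps m2 j (U x)))"

definition op_homotopic ::
  "(complex \<Rightarrow> 'a::{banach,real_normed_algebra} \<Rightarrow> 'a) \<Rightarrow> ('a \<Rightarrow> 'a) \<Rightarrow> nat \<Rightarrow> 'a fmod \<Rightarrow> 'a fmod \<Rightarrow> bool" where
  "op_homotopic scC st p m0 m1 \<longleftrightarrow> Hs m0 = Hs m1 \<and>
     (\<forall>x\<in>Hs m0. gam m0 x = gam m1 x) \<and>
     (\<forall>a. \<forall>x\<in>Hs m0. rho m0 a x = rho m1 a x) \<and>
     (\<forall>j<p. \<forall>x\<in>Hs m0. eps m0 j x = eps m1 j x) \<and>
     (\<exists>Fp :: real \<Rightarrow> op.
        (\<forall>t\<in>{0..1}. pgraded_fmod scC st p (m0\<lparr>Fop := Fp t\<rparr>)) \<and>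
        (\<forall>x\<in>Hs m0. Fp 0 x = Fop m0 x \<and> Fp 1 x = Fop m1 x) \<and>
        (\<forall>t\<in>{0..1}. \<forall>e>0. \<exists>d>0. \<forall>s\<in>{0..1}. \<bar>s - t\<bar> < d \<longrightarrow>
           (\<forall>x\<in>Hs m0. l2norm (Fp s x - Fp t x) \<le> e * l2norm x)))"

text \<open>Direct sum, realised inside l2(N) by interleaving even and odd coordinates.\<close>
definition interleave :: "cseq \<Rightarrow> cseq \<Rightarrow> cseq" where
  "interleave f g = (\<lambda>n. if even n then f (n div 2) else g (n div 2))"

definition evens :: "cseq \<Rightarrow> cseq" where "evens x = (\<lambda>n. x (2 * n))"
definition odds :: "cseq \<Rightarrow> cseq" where "odds x = (\<lambda>n. x (2 * n + 1))"

definition dsum_op :: "op \<Rightarrow> op \<Rightarrow> op" where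
  "dsum_op S T = (\<lambda>x. interleave (S (evens x)) (T (odds x)))"

definition dsum :: "'a fmod \<Rightarrow> 'a fmod \<Rightarrow> 'a fmod" where
  "dsum m1 m2 = \<lparr>Hs = {interleave f g | f g. f \<in> Hs m1 \<and> g \<in> Hs m2},
     gam = dsum_op (gam m1) (gam m2),
     rho = (\<lambda>a. dsum_op (rho m1 a) (rho m2 a)),
     Fop = dsum_op (Fop m1) (Fop m2),
     eps = (\<lambda>j. dsum_op (eps m1 j) (eps m2 j))\<rparr>"

text \<open>K^{-p}(A) is the free abelian group on p-graded Fredholm modules (functions to int
with finite support) modulo the subgroup Krel generated by unitary equivalence,
operator homotopy and additivity under direct sums. (Adding unitary equivalence as a
relation is the same as taking the free group on equivalence classes.)\<close>

definition gen :: "'a fmod \<Rightarrow> ('a fmod \<Rightarrow> int)" where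
  "gen m = (\<lambda>y. if y = m then 1 else 0)"

inductive_set Krel ::
  "(complex \<Rightarrow> 'a::{banach,real_normed_algebra} \<Rightarrow> 'a) \<Rightarrow> ('a \<Rightarrow> 'a) \<Rightarrow> nat \<Rightarrow> ('a fmod \<Rightarrow> int) set"
  for scC st p where
  zero: "0 \<in> Krel scC st p"
| ueq: "pgraded_fmod scC st p m0 \<Longrightarrow> pgraded_fmod scC st p m1 \<Longrightarrow> unitarily_equiv p m0 m1
         \<Longrightarrow> gen m0 - gen m1 \<in> Krel scC st p"
| homot: "pgraded_fmod scC st p m0 \<Longrightarrow> pgraded_fmod scC st p m1 \<Longrightarrow> op_homotopic scC st p m0 m1
         \<Longrightarrow> gen m0 - gen m1 \<in> Krel scC st p"
| dsum: "pgraded_fmod scC st p m0 \<Longrightarrow> pgraded_fmod scC st p m1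
         \<Longrightarrow> gen (dsum m0 m1) - gen m0 - gen m1 \<in> Krel scC st p"
| add: "u \<in> Krel scC st p \<Longrightarrow> v \<in> Krel scC st p \<Longrightarrow> u + v \<in> Krel scC st p"
| neg: "u \<in> Krel scC st p \<Longrightarrow> - u \<in> Krel scC st p"

definition Kclass_zero ::
  "(complex \<Rightarrow> 'a::{banach,real_normed_algebra} \<Rightarrow> 'a) \<Rightarrow> ('a \<Rightarrow> 'a) \<Rightarrow> nat \<Rightarrow> 'a fmod \<Rightarrow> bool" where
  "Kclass_zero scC st p m \<longleftrightarrow> gen m \<in> Krel scC st p"

end

theory Submission
  imports Defs
begin


definition nsq :: "cseq \<Rightarrow> real" where "nsq x = (\<Sum>n. (cmod (x n))\<^sup>2)"

lemma L2_iff: "x \<in> L2 \<longleftrightarrow> summable (\<lambda>n. (cmod (x n))\<^sup>2)"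
  by (simp add: L2_def)

lemma l2norm_nsq: "l2norm x = sqrt (nsq x)"
  by (simp add: l2norm_def nsq_def)

lemma nsq_nonneg: "x \<in> L2 \<Longrightarrow> 0 \<le> nsq x"
  unfolding nsq_def L2_iff by (intro suminf_nonneg) auto

lemma nsq_eq: "x \<in> L2 \<Longrightarrow> nsq x = (l2norm x)\<^sup>2"
  by (simp add: l2norm_nsq nsq_nonneg)

lemma l2norm_nonneg: "x \<in> L2 \<Longrightarrow> 0 \<le> l2norm x"
  by (simp add: l2norm_nsq nsq_nonneg)

lemma L2_zero[simp]: "0 \<in> L2"
  by (simp add: L2_iff)

lemma nsq_zero[simp]: "nsq 0 = 0" by (simp add: nsq_def)
lemma l2norm_zero[simp]: "l2norm 0 = 0" by (simp add: l2norm_nsq)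

lemma sq_add_bound: "(cmod (a + b))\<^sup>2 \<le> 2 * (cmod a)\<^sup>2 + 2 * (cmod b)\<^sup>2"
proof -
  have "cmod (a + b) \<le> cmod a + cmod b" by (rule norm_triangle_ineq)
  hence "(cmod (a + b))\<^sup>2 \<le> (cmod a + cmod b)\<^sup>2"
    by (intro power_mono) auto
  also have "\<dots> \<le> 2 * (cmod a)\<^sup>2 + 2 * (cmod b)\<^sup>2"
  proof -
    have "(cmod a + cmod b)\<^sup>2 = (cmod a)\<^sup>2 + (cmod b)\<^sup>2 + 2 * cmod a * cmod b" by (rule power2_sum)
    thus ?thesis using sum_squares_bound[of "cmod a" "cmod b"] by linarith
  qed
  finally show ?thesis .
qed

lemma L2_add: "x \<in> L2 \<Longrightarrow> y \<in> L2 \<Longrightarrow> x + y \<in> L2"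
  unfolding L2_iff
  by (rule summable_comparison_test'[where g="\<lambda>n. 2 * (cmod (x n))\<^sup>2 + 2 * (cmod (y n))\<^sup>2" and N=0])
     (auto intro!: summable_add summable_mult sq_add_bound)

lemma csc_apply[simp]: "csc c x n = c * x n" by (simp add: csc_def)

lemma L2_csc: "x \<in> L2 \<Longrightarrow> csc c x \<in> L2"
  unfolding L2_iff by (simp add: norm_mult power_mult_distrib summable_mult)

lemma L2_uminus: "x \<in> L2 \<Longrightarrow> - x \<in> L2"
  unfolding L2_iff by simp

lemma L2_diff: "x \<in> L2 \<Longrightarrow> y \<in> L2 \<Longrightarrow> x - y \<in> L2"
  by (metis diff_conv_add_uminus L2_add L2_uminus)

lemma prod_bound: "cmod (a * cnj b) \<le> ((cmod a)\<^sup>2 + (cmod b)\<^sup>2) / 2"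
proof -
  have "cmod (a * cnj b) = cmod a * cmod b" by (simp add: norm_mult)
  moreover have "2 * (cmod a * cmod b) \<le> (cmod a)\<^sup>2 + (cmod b)\<^sup>2"
    using sum_squares_bound[of "cmod a" "cmod b"] by (simp add: mult.assoc)
  ultimately show ?thesis by (simp add: field_simps)
qed

lemma inner_abs_summable: "x \<in> L2 \<Longrightarrow> y \<in> L2 \<Longrightarrow> summable (\<lambda>n. cmod (x n * cnj (y n)))"
proof (rule summable_comparison_test'[where g="\<lambda>n. ((cmod (x n))\<^sup>2 + (cmod (y n))\<^sup>2) / 2" and N=0])
  show "x \<in> L2 \<Longrightarrow> y \<in> L2 \<Longrightarrow> summable (\<lambda>n. ((cmod (x n))\<^sup>2 + (cmod (y n))\<^sup>2) / 2)"
    by (intro summable_add summable_divide) (auto simp: L2_iff)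
  show "norm (cmod (x n * cnj (y n))) \<le> ((cmod (x n))\<^sup>2 + (cmod (y n))\<^sup>2) / 2" for n
    by (simp only: real_norm_def abs_norm_cancel) (rule prod_bound)
qed

lemma inner_summable: "x \<in> L2 \<Longrightarrow> y \<in> L2 \<Longrightarrow> summable (\<lambda>n. x n * cnj (y n))"
  by (rule summable_norm_cancel[OF inner_abs_summable])

lemma inner_add_left: "x \<in> L2 \<Longrightarrow> y \<in> L2 \<Longrightarrow> z \<in> L2 \<Longrightarrow> l2inner (x + y) z = l2inner x z + l2inner y z"
  unfolding l2inner_def using inner_summable[of x z] inner_summable[of y z]
  by (simp add: distrib_right suminf_add)

lemma inner_csc_left: "x \<in> L2 \<Longrightarrow> z \<in> L2 \<Longrightarrow> l2inner (csc c x) z = c * l2inner x z"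
  unfolding l2inner_def using inner_summable[of x z]
  by (simp add: mult.assoc suminf_mult)

lemma inner_commute: "x \<in> L2 \<Longrightarrow> y \<in> L2 \<Longrightarrow> l2inner y x = cnj (l2inner x y)"
proof -
  assume a: "x \<in> L2" "y \<in> L2"
  have "(\<lambda>n. x n * cnj (y n)) sums l2inner x y"
    unfolding l2inner_def using inner_summable[OF a] by (simp add: summable_sums)
  hence "(\<lambda>n. cnj (x n * cnj (y n))) sums cnj (l2inner x y)" by (simp only: sums_cnj)
  hence "(\<lambda>n. y n * cnj (x n)) sums cnj (l2inner x y)" by (simp add: mult.commute)
  thus ?thesis unfolding l2inner_def by (simp add: sums_iff)
qed

lemma inner_add_right: "x \<in> L2 \<Longrightarrow> y \<in> L2 \<Longrightarrow> z \<in> L2 \<Longrightarrow> l2inner z (x + y) = l2inner z x + l2inner z y"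
proof -
  assume a: "x \<in> L2" "y \<in> L2" "z \<in> L2"
  have "l2inner z (x + y) = cnj (l2inner (x + y) z)" using a L2_add by (intro inner_commute) auto
  also have "\<dots> = cnj (l2inner x z) + cnj (l2inner y z)" using a by (simp add: inner_add_left)
  also have "\<dots> = l2inner z x + l2inner z y" using a by (simp add: inner_commute[of z])
  finally show ?thesis .
qed

lemma inner_csc_right: "x \<in> L2 \<Longrightarrow> z \<in> L2 \<Longrightarrow> l2inner z (csc c x) = cnj c * l2inner z x"
proof -
  assume a: "x \<in> L2" "z \<in> L2"
  have "l2inner z (csc c x) = cnj (l2inner (csc c x) z)" using a L2_csc by (intro inner_commute) auto
  also have "\<dots> = cnj c * cnj (l2inner x z)" using a by (simp add: inner_csc_left)
  also have "\<dots> = cnj c * l2inner z x" using a by (simp add: inner_commute[of z])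
  finally show ?thesis .
qed

lemma inner_zero_right[simp]: "l2inner x 0 = 0" by (simp add: l2inner_def)
lemma inner_zero_left[simp]: "l2inner 0 x = 0" by (simp add: l2inner_def)

lemma inner_self: "x \<in> L2 \<Longrightarrow> l2inner x x = complex_of_real (nsq x)"
proof -
  assume a: "x \<in> L2"
  have e: "\<And>n. x n * cnj (x n) = complex_of_real ((cmod (x n))\<^sup>2)"
    by (simp only: complex_norm_square)
  have "(\<lambda>n. complex_of_real ((cmod (x n))\<^sup>2)) sums complex_of_real (nsq x)"
    unfolding nsq_def by (rule sums_of_real[OF summable_sums]) (use a in \<open>simp add: L2_iff\<close>)
  thus ?thesis unfolding l2inner_def e by (simp add: sums_iff)
qed

lemma coord_bound: "x \<in> L2 \<Longrightarrow> (cmod (x k))\<^sup>2 \<le> nsq x"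
  unfolding nsq_def L2_iff using sum_le_suminf[of "\<lambda>n. (cmod (x n))\<^sup>2" "{k}"] by auto

lemma coord_bound': "x \<in> L2 \<Longrightarrow> cmod (x k) \<le> l2norm x"
  using coord_bound[of x k] by (simp add: l2norm_nsq real_le_rsqrt)

lemma nsq_zero_iff: "x \<in> L2 \<Longrightarrow> nsq x = 0 \<longleftrightarrow> x = 0"
proof
  assume a: "x \<in> L2" "nsq x = 0"
  show "x = 0"
  proof
    fix k
    have "(cmod (x k))\<^sup>2 \<le> 0" using coord_bound[OF a(1), of k] a(2) by simp
    thus "x k = 0 k" by simp
  qed
qed simp

lemma l2norm_zero_iff: "x \<in> L2 \<Longrightarrow> l2norm x = 0 \<longleftrightarrow> x = 0"
  by (simp add: l2norm_nsq nsq_zero_iff nsq_nonneg)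

lemma real_cs:
  fixes a b :: "nat \<Rightarrow> real"
  assumes a0: "\<And>n. 0 \<le> a n" and b0: "\<And>n. 0 \<le> b n"
    and sa: "summable (\<lambda>n. (a n)\<^sup>2)" and sb: "summable (\<lambda>n. (b n)\<^sup>2)"
  shows "summable (\<lambda>n. a n * b n) \<and> (\<Sum>n. a n * b n) \<le> sqrt (\<Sum>n. (a n)\<^sup>2) * sqrt (\<Sum>n. (b n)\<^sup>2)"
proof -
  define A where "A = (\<Sum>n. (a n)\<^sup>2)"
  define B where "B = (\<Sum>n. (b n)\<^sup>2)"
  have A0: "0 \<le> A" unfolding A_def by (intro suminf_nonneg sa) auto
  have B0: "0 \<le> B" unfolding B_def by (intro suminf_nonneg sb) auto
  have ab: "norm (a n * b n) \<le> ((a n)\<^sup>2 + (b n)\<^sup>2) / 2" for n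
  proof -
    have "2 * (a n * b n) \<le> (a n)\<^sup>2 + (b n)\<^sup>2"
      using sum_squares_bound[of "a n" "b n"] by (simp add: mult.assoc)
    moreover have "norm (a n * b n) = a n * b n" using a0[of n] b0[of n] by simp
    ultimately show ?thesis by (simp add: field_simps)
  qed
  have sab: "summable (\<lambda>n. a n * b n)"
    by (rule summable_comparison_test'[where g="\<lambda>n. ((a n)\<^sup>2 + (b n)\<^sup>2) / 2" and N=0])
       (use ab in \<open>auto intro!: summable_add summable_divide sa sb\<close>)
  have "(\<Sum>n. a n * b n) \<le> sqrt A * sqrt B"
  proof (cases "A = 0 \<or> B = 0")
    case True
    hence "\<forall>n. a n * b n = 0"
    proof
      assume "A = 0"
      hence "\<forall>n. (a n)\<^sup>2 = 0" unfolding A_def using suminf_eq_zero_iff[OF sa] by auto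
      thus ?thesis by simp
    next
      assume "B = 0"
      hence "\<forall>n. (b n)\<^sup>2 = 0" unfolding B_def using suminf_eq_zero_iff[OF sb] by auto
      thus ?thesis by simp
    qed
    hence "(\<lambda>n. a n * b n) = (\<lambda>n. 0)" by auto
    thus ?thesis using A0 B0 by simp
  next
    case False
    hence Ap: "0 < A" and Bp: "0 < B" using A0 B0 by auto
    define t where "t = sqrt B / sqrt A"
    have tp: "0 < t" unfolding t_def using Ap Bp by simp
    have pt: "a n * b n \<le> (t * (a n)\<^sup>2 + (b n)\<^sup>2 / t) / 2" for n
    proof -
      have h0: "2 * (t * a n) * b n \<le> (t * a n)\<^sup>2 + (b n)\<^sup>2" by (rule sum_squares_bound)
      have h1: "(t * a n)\<^sup>2 = t\<^sup>2 * (a n)\<^sup>2" by (rule power_mult_distrib)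
      have h2: "2 * (t * a n) * b n = (a n * b n) * (2 * t)" by (simp add: algebra_simps)
      have h3: "(t * (a n)\<^sup>2 + (b n)\<^sup>2 / t) / 2 = (t\<^sup>2 * (a n)\<^sup>2 + (b n)\<^sup>2) / (2 * t)"
        using tp by (simp add: field_simps power2_eq_square)
      have "(a n * b n) * (2 * t) \<le> t\<^sup>2 * (a n)\<^sup>2 + (b n)\<^sup>2" using h0 h1 h2 by linarith
      hence "a n * b n \<le> (t\<^sup>2 * (a n)\<^sup>2 + (b n)\<^sup>2) / (2 * t)"
        using tp by (simp add: pos_le_divide_eq)
      thus ?thesis by (subst h3)
    qed
    have ssum: "(\<lambda>n. (t * (a n)\<^sup>2 + (b n)\<^sup>2 / t) / 2) sums ((t * A + B / t) / 2)"
      unfolding A_def B_def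
      by (intro sums_divide sums_add sums_mult summable_sums sa sb)
    have "(\<Sum>n. a n * b n) \<le> (\<Sum>n. (t * (a n)\<^sup>2 + (b n)\<^sup>2 / t) / 2)"
      by (rule suminf_le[OF pt sab]) (use ssum in \<open>simp add: sums_iff\<close>)
    also have "\<dots> = (t * A + B / t) / 2" using ssum by (simp add: sums_iff)
    also have "\<dots> = sqrt A * sqrt B"
    proof -
      have sA: "sqrt A * sqrt A = A" using A0 by simp
      have sB: "sqrt B * sqrt B = B" using B0 by simp
      have sAp: "sqrt A > 0" using Ap by simp
      have sBp: "sqrt B > 0" using Bp by simp
      have "t * A = sqrt A * sqrt B" unfolding t_def using sAp
        by (subst sA[symmetric]) (simp add: field_simps)
      moreover have "B / t = sqrt A * sqrt B" unfolding t_def using sAp sBp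
        by (subst sB[symmetric]) (simp add: field_simps)
      ultimately show ?thesis by simp
    qed
    finally show ?thesis .
  qed
  thus ?thesis using sab A_def B_def by simp
qed

lemma cauchy_schwarz: "x \<in> L2 \<Longrightarrow> y \<in> L2 \<Longrightarrow> cmod (l2inner x y) \<le> l2norm x * l2norm y"
proof -
  assume x: "x \<in> L2" and y: "y \<in> L2"
  have "cmod (l2inner x y) \<le> (\<Sum>n. cmod (x n * cnj (y n)))"
    unfolding l2inner_def by (rule summable_norm[OF inner_abs_summable[OF x y]])
  also have "\<dots> = (\<Sum>n. cmod (x n) * cmod (y n))" by (simp add: norm_mult)
  also have "\<dots> \<le> l2norm x * l2norm y"
    using real_cs[of "\<lambda>n. cmod (x n)" "\<lambda>n. cmod (y n)"] x y
    by (simp add: L2_iff l2norm_def)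
  finally show ?thesis .
qed

lemma sq_expand: "(cmod (a + b))\<^sup>2 = (cmod a)\<^sup>2 + (cmod b)\<^sup>2 + 2 * Re (a * cnj b)"
  unfolding cmod_power2 by (simp add: power2_sum)

lemma nsq_add: "x \<in> L2 \<Longrightarrow> y \<in> L2 \<Longrightarrow> nsq (x + y) = nsq x + nsq y + 2 * Re (l2inner x y)"
proof -
  assume x: "x \<in> L2" and y: "y \<in> L2"
  have s1: "summable (\<lambda>n. (cmod (x n))\<^sup>2)" "summable (\<lambda>n. (cmod (y n))\<^sup>2)"
    using x y by (auto simp: L2_iff)
  have s3: "summable (\<lambda>n. Re (x n * cnj (y n)))" using summable_Re[OF inner_summable[OF x y]] .
  have "nsq (x + y) = (\<Sum>n. (cmod (x n))\<^sup>2 + (cmod (y n))\<^sup>2 + 2 * Re (x n * cnj (y n)))"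
    unfolding nsq_def by (simp only: plus_fun_apply sq_expand)
  also have "\<dots> = (\<Sum>n. (cmod (x n))\<^sup>2 + (cmod (y n))\<^sup>2) + (\<Sum>n. 2 * Re (x n * cnj (y n)))"
    by (rule suminf_add[symmetric]) (intro summable_add summable_mult s1 s3)+
  also have "(\<Sum>n. (cmod (x n))\<^sup>2 + (cmod (y n))\<^sup>2) = nsq x + nsq y"
    unfolding nsq_def by (rule suminf_add[symmetric]) (rule s1)+
  also have "(\<Sum>n. 2 * Re (x n * cnj (y n))) = 2 * (\<Sum>n. Re (x n * cnj (y n)))"
    by (rule suminf_mult[OF s3])
  also have "(\<Sum>n. Re (x n * cnj (y n))) = Re (l2inner x y)"
    unfolding l2inner_def using Re_suminf[OF inner_summable[OF x y]] by simp
  finally show ?thesis .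
qed

lemma nsq_csc: "x \<in> L2 \<Longrightarrow> nsq (csc c x) = (cmod c)\<^sup>2 * nsq x"
  unfolding nsq_def L2_iff by (simp add: norm_mult power_mult_distrib suminf_mult)

lemma l2norm_csc: "x \<in> L2 \<Longrightarrow> l2norm (csc c x) = cmod c * l2norm x"
  by (simp add: l2norm_nsq nsq_csc real_sqrt_mult)

lemma uminus_csc: "- x = csc (-1) x" by (simp add: fun_eq_iff)

lemma l2norm_uminus: "x \<in> L2 \<Longrightarrow> l2norm (- x) = l2norm x"
  by (simp add: uminus_csc l2norm_csc)

lemma l2norm_triangle: "x \<in> L2 \<Longrightarrow> y \<in> L2 \<Longrightarrow> l2norm (x + y) \<le> l2norm x + l2norm y"
proof -
  assume x: "x \<in> L2" and y: "y \<in> L2"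
  have "nsq (x + y) \<le> (l2norm x)\<^sup>2 + (l2norm y)\<^sup>2 + 2 * (l2norm x * l2norm y)"
    using nsq_add[OF x y] cauchy_schwarz[OF x y] complex_Re_le_cmod[of "l2inner x y"]
      nsq_eq[OF x] nsq_eq[OF y] by linarith
  also have "\<dots> = (l2norm x + l2norm y)\<^sup>2" by (simp add: power2_sum)
  finally have "sqrt (nsq (x + y)) \<le> sqrt ((l2norm x + l2norm y)\<^sup>2)" by (rule real_sqrt_le_mono)
  also have "\<dots> = l2norm x + l2norm y" using l2norm_nonneg[OF x] l2norm_nonneg[OF y] by simp
  finally show ?thesis by (simp add: l2norm_nsq[of "x+y"])
qed

lemma l2norm_diff_commute: "x \<in> L2 \<Longrightarrow> y \<in> L2 \<Longrightarrow> l2norm (x - y) = l2norm (y - x)"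
  by (metis L2_diff l2norm_uminus minus_diff_eq)

lemma l2norm_diff_triangle: "x \<in> L2 \<Longrightarrow> y \<in> L2 \<Longrightarrow> z \<in> L2 \<Longrightarrow> l2norm (x - y) \<le> l2norm (x - z) + l2norm (z - y)"
  using l2norm_triangle[of "x - z" "z - y"] by (simp add: L2_diff)

lemma l2norm_diff_ge: "x \<in> L2 \<Longrightarrow> y \<in> L2 \<Longrightarrow> \<bar>l2norm x - l2norm y\<bar> \<le> l2norm (x - y)"
  using l2norm_triangle[of "x - y" y] l2norm_triangle[of "y - x" x] l2norm_diff_commute[of x y]
  by (simp add: L2_diff)



declare fun_diff_def[simp del] fun_Compl_def[simp del]

lemma minus_fun_apply'[simp]: "((f::cseq) - g) n = f n - g n" by simp
lemma uminus_fun_apply'[simp]: "(- (f::cseq)) n = - f n" by simp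

lemma L2_complete:
  assumes s: "\<And>n. s n \<in> L2"
    and C: "\<And>e. e > 0 \<Longrightarrow> \<exists>N. \<forall>m\<ge>N. \<forall>n\<ge>N. l2norm (s m - s n) < e"
  shows "\<exists>y\<in>L2. (\<lambda>n. l2norm (s n - y)) \<longlonglongrightarrow> 0"
proof -
  have cc: "Cauchy (\<lambda>n. s n k)" for k
  proof (rule metric_CauchyI)
    fix e :: real assume "e > 0"
    then obtain N where N: "\<forall>m\<ge>N. \<forall>n\<ge>N. l2norm (s m - s n) < e" using C by blast
    have "\<forall>m\<ge>N. \<forall>n\<ge>N. dist (s m k) (s n k) < e"
    proof (intro allI impI)
      fix m n assume "m \<ge> N" "n \<ge> N"
      have "dist (s m k) (s n k) = cmod ((s m - s n) k)" by (simp add: dist_norm)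
      also have "\<dots> \<le> l2norm (s m - s n)" by (rule coord_bound'[OF L2_diff[OF s s]])
      finally show "dist (s m k) (s n k) < e" using N \<open>m \<ge> N\<close> \<open>n \<ge> N\<close> by fastforce
    qed
    thus "\<exists>M. \<forall>m\<ge>M. \<forall>n\<ge>M. dist (s m k) (s n k) < e" by blast
  qed
  define y where "y k = lim (\<lambda>n. s n k)" for k
  have ylim: "(\<lambda>n. s n k) \<longlonglongrightarrow> y k" for k
    unfolding y_def using cc[of k] by (simp add: Cauchy_convergent_iff convergent_LIMSEQ_iff)
  have key: "\<exists>N. \<forall>n\<ge>N. s n - y \<in> L2 \<and> nsq (s n - y) \<le> e\<^sup>2" if e: "e > 0" for e
  proof -
    obtain N where N: "\<forall>m\<ge>N. \<forall>n\<ge>N. l2norm (s m - s n) < e" using C e by blast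
    have "s n - y \<in> L2 \<and> nsq (s n - y) \<le> e\<^sup>2" if n: "n \<ge> N" for n
    proof -
      have ps: "(\<Sum>k<K. (cmod (s n k - y k))\<^sup>2) \<le> e\<^sup>2" for K
      proof -
        have lim: "(\<lambda>m. \<Sum>k<K. (cmod (s n k - s m k))\<^sup>2) \<longlonglongrightarrow> (\<Sum>k<K. (cmod (s n k - y k))\<^sup>2)"
          by (intro tendsto_intros ylim)
        have "(\<Sum>k<K. (cmod (s n k - s m k))\<^sup>2) \<le> e\<^sup>2" if m: "m \<ge> N" for m
        proof -
          have L: "s n - s m \<in> L2" by (rule L2_diff[OF s s])
          have "(\<Sum>k<K. (cmod ((s n - s m) k))\<^sup>2) \<le> nsq (s n - s m)"
            unfolding nsq_def using L[unfolded L2_iff]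
            by (intro sum_le_suminf) auto
          hence "(\<Sum>k<K. (cmod (s n k - s m k))\<^sup>2) \<le> nsq (s n - s m)" by simp
          also have "\<dots> = (l2norm (s n - s m))\<^sup>2" by (rule nsq_eq[OF L])
          also have "\<dots> \<le> e\<^sup>2"
            using N n m l2norm_nonneg[OF L] by (intro power_mono) (auto simp: less_imp_le)
          finally show ?thesis .
        qed
        thus ?thesis by (intro LIMSEQ_le_const2[OF lim]) blast
      qed
      have sm: "summable (\<lambda>k. (cmod (s n k - y k))\<^sup>2)"
        by (rule summableI_nonneg_bounded[where x="e\<^sup>2"]) (use ps in auto)
      hence "s n - y \<in> L2" by (simp add: L2_iff)
      moreover have "nsq (s n - y) \<le> e\<^sup>2"
        unfolding nsq_def using suminf_le_const[OF sm ps] by simp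
      ultimately show ?thesis by blast
    qed
    thus ?thesis by blast
  qed
  obtain N1 where N1: "\<forall>n\<ge>N1. s n - y \<in> L2" using key[of 1] by auto
  have yL: "y \<in> L2"
  proof -
    have "s N1 - (s N1 - y) \<in> L2" by (rule L2_diff[OF s]) (use N1 in auto)
    moreover have "s N1 - (s N1 - y) = y" by (rule ext) simp
    ultimately show ?thesis by simp
  qed
  have "(\<lambda>n. l2norm (s n - y)) \<longlonglongrightarrow> 0"
  proof (rule LIMSEQ_I)
    fix r :: real assume r: "r > 0"
    obtain N where N: "\<forall>n\<ge>N. s n - y \<in> L2 \<and> nsq (s n - y) \<le> (r/2)\<^sup>2" using key[of "r/2"] r by auto
    have "norm (l2norm (s n - y) - 0) < r" if "n \<ge> N" for n
    proof -
      have "l2norm (s n - y) \<le> sqrt ((r/2)\<^sup>2)" unfolding l2norm_nsq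
        using N that by (intro real_sqrt_le_mono) auto
      also have "\<dots> = r/2" using r by simp
      finally show ?thesis using r l2norm_nonneg[of "s n - y"] N that by auto
    qed
    thus "\<exists>no. \<forall>n\<ge>no. norm (l2norm (s n - y) - 0) < r" by blast
  qed
  thus ?thesis using yL by blast
qed

lemma cs_L2: "closed_subspace H \<Longrightarrow> x \<in> H \<Longrightarrow> x \<in> L2"
  by (auto simp: closed_subspace_def)
lemma cs_zero: "closed_subspace H \<Longrightarrow> 0 \<in> H"
  by (auto simp: closed_subspace_def)
lemma cs_add: "closed_subspace H \<Longrightarrow> x \<in> H \<Longrightarrow> y \<in> H \<Longrightarrow> x + y \<in> H"
  by (auto simp: closed_subspace_def)
lemma cs_csc: "closed_subspace H \<Longrightarrow> x \<in> H \<Longrightarrow> csc c x \<in> H"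
  by (auto simp: closed_subspace_def)
lemma diff_csc: "(x::cseq) - y = x + csc (-1) y" by (rule ext) simp
lemma cs_diff: "closed_subspace H \<Longrightarrow> x \<in> H \<Longrightarrow> y \<in> H \<Longrightarrow> x - y \<in> H"
  unfolding diff_csc by (intro cs_add cs_csc)
lemma cs_uminus: "closed_subspace H \<Longrightarrow> x \<in> H \<Longrightarrow> - x \<in> H"
  unfolding uminus_csc by (intro cs_csc)
lemma cs_closed: "closed_subspace H \<Longrightarrow> (\<And>n. s n \<in> H) \<Longrightarrow> y \<in> L2 \<Longrightarrow> (\<lambda>n. l2norm (s n - y)) \<longlonglongrightarrow> 0 \<Longrightarrow> y \<in> H"
  unfolding closed_subspace_def by blast

lemma inner_diff_right: "x \<in> L2 \<Longrightarrow> y \<in> L2 \<Longrightarrow> z \<in> L2 \<Longrightarrow> l2inner x (y - z) = l2inner x y - l2inner x z"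
  unfolding diff_csc by (simp add: inner_add_right L2_csc inner_csc_right)

lemma inner_diff_left: "x \<in> L2 \<Longrightarrow> y \<in> L2 \<Longrightarrow> z \<in> L2 \<Longrightarrow> l2inner (y - z) x = l2inner y x - l2inner z x"
  unfolding diff_csc by (simp add: inner_add_left L2_csc inner_csc_left)

lemma nsq_diff: "x \<in> L2 \<Longrightarrow> y \<in> L2 \<Longrightarrow> nsq (x - y) = nsq x + nsq y - 2 * Re (l2inner x y)"
proof -
  assume x: "x \<in> L2" and y: "y \<in> L2"
  have "nsq (x - y) = nsq x + nsq (csc (-1) y) + 2 * Re (l2inner x (csc (-1) y))"
    unfolding diff_csc by (rule nsq_add[OF x L2_csc[OF y]])
  also have "nsq (csc (-1) y) = nsq y" by (simp add: nsq_csc y)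
  also have "l2inner x (csc (-1) y) = - l2inner x y" by (simp add: inner_csc_right x y)
  finally have c: "nsq (x - y) = nsq x + nsq y + 2 * Re (- l2inner x y)" .
  have "Re (- l2inner x y) = - Re (l2inner x y)" by simp
  thus ?thesis using c by linarith
qed

lemma quad_zero:
  fixes a b :: real
  assumes b: "b \<ge> 0" and q: "\<And>t. 0 \<le> t\<^sup>2 * b + t * a"
  shows "a = 0"
proof (rule ccontr)
  assume a: "a \<noteq> 0"
  define t where "t = - a / (b + 1)"
  have bp: "b + 1 \<noteq> 0" using b by simp
  have at: "a = - (t * (b + 1))" unfolding t_def using bp by simp
  have tn: "t \<noteq> 0" unfolding t_def using a bp by simp
  have "t\<^sup>2 * b + t * a = - (t\<^sup>2)" unfolding at by (simp add: power2_eq_square algebra_simps)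
  also have "\<dots> < 0" using tn by simp
  finally show False using q[of t] by simp
qed

lemma to_lim: "(\<lambda>n. X n - (c::real)) \<longlonglongrightarrow> 0 \<Longrightarrow> X \<longlonglongrightarrow> c"
proof -
  assume h: "(\<lambda>n. X n - c) \<longlonglongrightarrow> 0"
  have "(\<lambda>n. (X n - c) + c) \<longlonglongrightarrow> 0 + c" by (intro tendsto_add h tendsto_const)
  thus ?thesis by simp
qed

lemma riesz:
  assumes H: "closed_subspace H"
    and add: "\<And>x y. x \<in> H \<Longrightarrow> y \<in> H \<Longrightarrow> \<phi> (x + y) = \<phi> x + \<phi> y"
    and hom: "\<And>c x. x \<in> H \<Longrightarrow> \<phi> (csc c x) = c * \<phi> x"
    and bnd: "\<And>x. x \<in> H \<Longrightarrow> cmod (\<phi> x) \<le> C * l2norm x"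
  shows "\<exists>z\<in>H. \<forall>x\<in>H. \<phi> x = l2inner x z"
proof -
  have HL: "\<And>x. x \<in> H \<Longrightarrow> x \<in> L2" using cs_L2[OF H] .
  have phidiff: "\<phi> (x - y) = \<phi> x - \<phi> y" if "x \<in> H" "y \<in> H" for x y
    unfolding diff_csc using that by (simp add: add hom cs_csc[OF H])
  define J where "J x = nsq x - 2 * Re (\<phi> x)" for x
  have Jlow: "- (C\<^sup>2) \<le> J x" if x: "x \<in> H" for x
  proof -
    have "Re (\<phi> x) \<le> C * l2norm x" using complex_Re_le_cmod[of "\<phi> x"] bnd[OF x] by linarith
    moreover have "0 \<le> (l2norm x - C)\<^sup>2" by simp
    moreover have "(l2norm x - C)\<^sup>2 = (l2norm x)\<^sup>2 - 2 * (C * l2norm x) + C\<^sup>2"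
      by (simp add: power2_diff algebra_simps)
    ultimately show ?thesis unfolding J_def nsq_eq[OF HL[OF x]] by linarith
  qed
  define \<mu> where "\<mu> = Inf (J ` H)"
  have bdd: "bdd_below (J ` H)" using Jlow by (auto intro!: bdd_belowI)
  have ne: "J ` H \<noteq> {}" using cs_zero[OF H] by auto
  have mule: "\<mu> \<le> J x" if "x \<in> H" for x unfolding \<mu>_def by (rule cInf_lower) (use that bdd in auto)
  have "\<forall>n. \<exists>h\<in>H. J h < \<mu> + inverse (real (Suc n))"
  proof
    fix n
    have "\<mu> < \<mu> + inverse (real (Suc n))" by simp
    then obtain v where "v \<in> J ` H" "v < \<mu> + inverse (real (Suc n))"
      using cInf_lessD[OF ne] unfolding \<mu>_def by blast
    thus "\<exists>h\<in>H. J h < \<mu> + inverse (real (Suc n))" by blast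
  qed
  then obtain s where sH: "\<And>n. s n \<in> H" and sJ: "\<And>n. J (s n) < \<mu> + inverse (real (Suc n))"
    by metis
  have para: "nsq (a - b) \<le> 2 * (J a + J b) - 4 * \<mu>" if a: "a \<in> H" and b: "b \<in> H" for a b
  proof -
    define m where "m = csc (1/2) (a + b)"
    have mH: "m \<in> H" unfolding m_def using a b H by (intro cs_csc cs_add)
    have aL: "a \<in> L2" and bL: "b \<in> L2" using a b HL by auto
    have e1: "nsq (a + b) = nsq a + nsq b + 2 * Re (l2inner a b)" by (rule nsq_add[OF aL bL])
    have e2: "nsq (a - b) = nsq a + nsq b - 2 * Re (l2inner a b)" by (rule nsq_diff[OF aL bL])
    have e3: "4 * nsq m = nsq (a + b)" unfolding m_def
      by (simp add: nsq_csc L2_add[OF aL bL] power2_eq_square)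
    have e4: "2 * \<phi> m = \<phi> a + \<phi> b" unfolding m_def using a b H
      by (simp add: hom add cs_add)
    have e5: "2 * Re (\<phi> m) = Re (\<phi> a) + Re (\<phi> b)"
      using arg_cong[OF e4, of Re] by simp
    have "\<mu> \<le> J m" by (rule mule[OF mH])
    thus ?thesis using e1 e2 e3 e5 unfolding J_def by argo
  qed
  have cauchy: "\<exists>N. \<forall>m\<ge>N. \<forall>n\<ge>N. l2norm (s m - s n) < e" if e: "e > 0" for e
  proof -
    obtain N where N: "inverse (real (Suc N)) < e\<^sup>2 / 4"
      using reals_Archimedean[of "e\<^sup>2 / 4"] e by auto
    have "l2norm (s m - s n) < e" if m: "m \<ge> N" and n: "n \<ge> N" for m n
    proof -
      have im: "inverse (real (Suc m)) \<le> inverse (real (Suc N))" using m by (simp add: field_simps)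
      have inn: "inverse (real (Suc n)) \<le> inverse (real (Suc N))" using n by (simp add: field_simps)
      have "nsq (s m - s n) \<le> 2 * (J (s m) + J (s n)) - 4 * \<mu>" by (rule para[OF sH sH])
      also have "\<dots> < 4 * inverse (real (Suc N))" using sJ[of m] sJ[of n] im inn by argo
      also have "\<dots> < e\<^sup>2" using N by (simp add: field_simps)
      finally have "sqrt (nsq (s m - s n)) < sqrt (e\<^sup>2)" by (rule real_sqrt_less_mono)
      thus ?thesis using e by (simp add: l2norm_nsq)
    qed
    thus ?thesis by blast
  qed
  obtain z where zL: "z \<in> L2" and zlim: "(\<lambda>n. l2norm (s n - z)) \<longlonglongrightarrow> 0"
    using L2_complete[of s, OF HL[OF sH] cauchy] by blast
  have zH: "z \<in> H" by (rule cs_closed[OF H sH zL zlim])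
  have nlim: "(\<lambda>n. l2norm (s n)) \<longlonglongrightarrow> l2norm z"
  proof (rule to_lim, rule Lim_null_comparison[OF _ zlim])
    show "\<forall>\<^sub>F n in sequentially. norm (l2norm (s n) - l2norm z) \<le> l2norm (s n - z)"
      using l2norm_diff_ge[OF HL[OF sH] zL] by simp
  qed
  have plim: "(\<lambda>n. Re (\<phi> (s n))) \<longlonglongrightarrow> Re (\<phi> z)"
  proof (rule to_lim, rule Lim_null_comparison)
    show "\<forall>\<^sub>F n in sequentially. norm (Re (\<phi> (s n)) - Re (\<phi> z)) \<le> C * l2norm (s n - z)"
    proof (rule always_eventually, rule allI)
      fix n
      have "norm (Re (\<phi> (s n)) - Re (\<phi> z)) = \<bar>Re (\<phi> (s n) - \<phi> z)\<bar>" by simp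
      also have "\<dots> \<le> cmod (\<phi> (s n) - \<phi> z)" by (rule abs_Re_le_cmod)
      also have "\<phi> (s n) - \<phi> z = \<phi> (s n - z)" by (rule phidiff[OF sH zH, symmetric])
      also have "cmod (\<phi> (s n - z)) \<le> C * l2norm (s n - z)" by (rule bnd[OF cs_diff[OF H sH zH]])
      finally show "norm (Re (\<phi> (s n)) - Re (\<phi> z)) \<le> C * l2norm (s n - z)" .
    qed
    show "(\<lambda>n. C * l2norm (s n - z)) \<longlonglongrightarrow> 0" using tendsto_mult_right_zero[OF zlim] by simp
  qed
  have Jlim: "(\<lambda>n. J (s n)) \<longlonglongrightarrow> J z"
  proof -
    have "(\<lambda>n. (l2norm (s n))\<^sup>2 - 2 * Re (\<phi> (s n))) \<longlonglongrightarrow> (l2norm z)\<^sup>2 - 2 * Re (\<phi> z)"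
      by (intro tendsto_intros nlim plim)
    moreover have "\<And>n. J (s n) = (l2norm (s n))\<^sup>2 - 2 * Re (\<phi> (s n))"
      unfolding J_def using nsq_eq[OF HL[OF sH]] by simp
    moreover have "J z = (l2norm z)\<^sup>2 - 2 * Re (\<phi> z)" unfolding J_def using nsq_eq[OF zL] by simp
    ultimately show ?thesis by simp
  qed
  have Jz: "J z \<le> \<mu>"
  proof (rule LIMSEQ_le[OF Jlim])
    show "(\<lambda>n. \<mu> + inverse (real (Suc n))) \<longlonglongrightarrow> \<mu>"
      using tendsto_add[OF tendsto_const LIMSEQ_inverse_real_of_nat, of \<mu>] by simp
    show "\<exists>N. \<forall>n\<ge>N. J (s n) \<le> \<mu> + inverse (real (Suc n))" using sJ less_imp_le by blast
  qed
  have re: "Re (l2inner z x) = Re (\<phi> x)" if x: "x \<in> H" for x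
  proof -
    have xL: "x \<in> L2" using HL[OF x] .
    have "0 \<le> t\<^sup>2 * nsq x + t * (2 * (Re (l2inner z x) - Re (\<phi> x)))" for t
    proof -
      have wH: "csc (complex_of_real t) x \<in> H" by (rule cs_csc[OF H x])
      have "\<mu> \<le> J (z + csc (complex_of_real t) x)" by (rule mule[OF cs_add[OF H zH wH]])
      moreover have "nsq (z + csc (complex_of_real t) x) = nsq z + t\<^sup>2 * nsq x + 2 * (t * Re (l2inner z x))"
        using nsq_add[OF zL L2_csc[OF xL]] by (simp add: nsq_csc xL inner_csc_right zL)
      moreover have "\<phi> (z + csc (complex_of_real t) x) = \<phi> z + complex_of_real t * \<phi> x"
        using add[OF zH wH] hom[OF x] by simp
      moreover have "Re (complex_of_real t * \<phi> x) = t * Re (\<phi> x)" by simp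
      ultimately have "J z \<le> J z + t\<^sup>2 * nsq x + t * (2 * (Re (l2inner z x) - Re (\<phi> x)))"
        using Jz unfolding J_def by (simp add: algebra_simps)
      thus ?thesis by simp
    qed
    hence "2 * (Re (l2inner z x) - Re (\<phi> x)) = 0"
      by (intro quad_zero[of "nsq x"] nsq_nonneg[OF xL])
    thus ?thesis by simp
  qed
  have "\<phi> x = l2inner x z" if x: "x \<in> H" for x
  proof -
    have xL: "x \<in> L2" using HL[OF x] .
    have r1: "Re (l2inner z x) = Re (\<phi> x)" by (rule re[OF x])
    have "Re (l2inner z (csc \<i> x)) = Re (\<phi> (csc \<i> x))" by (rule re[OF cs_csc[OF H x]])
    hence r2: "Im (l2inner z x) = - Im (\<phi> x)"
      by (simp add: inner_csc_right zL xL hom[OF x])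
    have "l2inner x z = cnj (l2inner z x)" by (rule inner_commute[OF zL xL])
    thus ?thesis using r1 r2 by (simp add: complex_eq_iff)
  qed
  thus ?thesis using zH by blast
qed

lemma adj_unique:
  assumes H: "closed_subspace H" and z1: "z1 \<in> H" and z2: "z2 \<in> H"
    and eq: "\<And>x. x \<in> H \<Longrightarrow> l2inner x z1 = l2inner x z2"
  shows "z1 = z2"
proof -
  have dH: "z1 - z2 \<in> H" by (rule cs_diff[OF H z1 z2])
  have L: "z1 \<in> L2" "z2 \<in> L2" "z1 - z2 \<in> L2" using z1 z2 dH cs_L2[OF H] by auto
  have "l2inner (z1 - z2) (z1 - z2) = 0"
    using inner_diff_right[OF L(3) L(1) L(2)] eq[OF dH] by simp
  hence "nsq (z1 - z2) = 0" using inner_self[OF L(3)] by simp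
  hence "z1 - z2 = 0" using nsq_zero_iff[OF L(3)] by simp
  thus ?thesis by simp
qed

lemma adj_eqI:
  assumes H: "closed_subspace H" and z: "z \<in> H"
    and eq: "\<And>x. x \<in> H \<Longrightarrow> l2inner (T x) y = l2inner x z"
  shows "adj H T y = z"
  unfolding adj_def
proof (rule the_equality)
  show "z \<in> H \<and> (\<forall>x\<in>H. l2inner (T x) y = l2inner x z)" using z eq by blast
  fix w assume w: "w \<in> H \<and> (\<forall>x\<in>H. l2inner (T x) y = l2inner x w)"
  show "w = z" by (rule adj_unique[OF H]) (use w z eq in auto)
qed

lemma bounded_onD:
  assumes H: "closed_subspace H" and "bounded_on H T"
  shows "\<And>x. x \<in> H \<Longrightarrow> T x \<in> H"
    and "\<And>x y. x \<in> H \<Longrightarrow> y \<in> H \<Longrightarrow> T (x + y) = T x + T y"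
    and "\<And>c x. x \<in> H \<Longrightarrow> T (csc c x) = csc c (T x)"
    and "\<exists>C\<ge>0. \<forall>x\<in>H. l2norm (T x) \<le> C * l2norm x"
proof -
  show "\<And>x. x \<in> H \<Longrightarrow> T x \<in> H" "\<And>x y. x \<in> H \<Longrightarrow> y \<in> H \<Longrightarrow> T (x + y) = T x + T y"
    "\<And>c x. x \<in> H \<Longrightarrow> T (csc c x) = csc c (T x)" using assms by (auto simp: bounded_on_def)
  obtain C where C: "\<forall>x\<in>H. l2norm (T x) \<le> C * l2norm x" using assms by (auto simp: bounded_on_def)
  have "\<forall>x\<in>H. l2norm (T x) \<le> \<bar>C\<bar> * l2norm x"
  proof
    fix x assume x: "x \<in> H"
    have "C * l2norm x \<le> \<bar>C\<bar> * l2norm x" by (rule mult_right_mono) (auto intro: l2norm_nonneg cs_L2[OF H x])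
    thus "l2norm (T x) \<le> \<bar>C\<bar> * l2norm x" using C x by fastforce
  qed
  thus "\<exists>C\<ge>0. \<forall>x\<in>H. l2norm (T x) \<le> C * l2norm x" by (intro exI[of _ "\<bar>C\<bar>"]) auto
qed

lemma adj_exists:
  assumes H: "closed_subspace H" and T: "bounded_on H T" and y: "y \<in> H"
  shows "adj H T y \<in> H \<and> (\<forall>x\<in>H. l2inner (T x) y = l2inner x (adj H T y))"
proof -
  have HL: "\<And>x. x \<in> H \<Longrightarrow> x \<in> L2" using cs_L2[OF H] .
  obtain C where C0: "C \<ge> 0" and C: "\<forall>x\<in>H. l2norm (T x) \<le> C * l2norm x" using bounded_onD(4)[OF H T] by blast
  have "\<exists>z\<in>H. \<forall>x\<in>H. l2inner (T x) y = l2inner x z"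
  proof (rule riesz[OF H, where C="C * l2norm y"])
    fix x x' c assume x: "x \<in> H" and x': "x' \<in> H"
    show "l2inner (T (x + x')) y = l2inner (T x) y + l2inner (T x') y"
      using bounded_onD(1,2)[OF H T] x x' y HL by (simp add: inner_add_left)
    show "l2inner (T (csc c x)) y = c * l2inner (T x) y"
      using bounded_onD(1,3)[OF H T] x y HL by (simp add: inner_csc_left)
    have "cmod (l2inner (T x) y) \<le> l2norm (T x) * l2norm y"
      by (rule cauchy_schwarz) (use bounded_onD(1)[OF H T] x y HL in auto)
    also have "\<dots> \<le> (C * l2norm x) * l2norm y"
      by (rule mult_right_mono) (use C x y HL l2norm_nonneg in auto)
    finally show "cmod (l2inner (T x) y) \<le> C * l2norm y * l2norm x" by (simp add: algebra_simps)
  qed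
  then obtain z where z: "z \<in> H" "\<forall>x\<in>H. l2inner (T x) y = l2inner x z" by blast
  have "adj H T y = z" by (rule adj_eqI[OF H z(1)]) (use z in auto)
  thus ?thesis using z by simp
qed

lemma adj_prop:
  assumes H: "closed_subspace H" and T: "bounded_on H T"
    and S: "\<And>x. x \<in> H \<Longrightarrow> adj H T x = S x"
    and x: "x \<in> H" and y: "y \<in> H"
  shows "l2inner (T x) y = l2inner x (S y)" and "S y \<in> H"
  using adj_exists[OF H T y] S[OF y] x by auto



lemma evens_apply[simp]: "evens x n = x (2*n)" by (simp add: evens_def)
lemma odds_apply[simp]: "odds x n = x (2*n+1)" by (simp add: odds_def)
lemma interleave_even[simp]: "interleave f g (2*n) = f n" by (simp add: interleave_def)
lemma interleave_odd[simp]: "interleave f g (2*n+1) = g n" by (simp add: interleave_def)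
lemma interleave_odd'[simp]: "interleave f g (Suc (2*n)) = g n" by (simp add: interleave_def)
lemma evens_interleave[simp]: "evens (interleave f g) = f" by (rule ext) simp
lemma odds_interleave[simp]: "odds (interleave f g) = g" by (rule ext) simp
lemma interleave_eo: "interleave (evens w) (odds w) = w"
proof (rule ext)
  fix n show "interleave (evens w) (odds w) n = w n"
    by (cases "even n") (auto simp: interleave_def elim!: evenE oddE)
qed

lemma evens_add[simp]: "evens (x + y) = evens x + evens y" by (rule ext) simp
lemma odds_add[simp]: "odds (x + y) = odds x + odds y" by (rule ext) simp
lemma evens_diff[simp]: "evens (x - y) = evens x - evens y" by (rule ext) simp
lemma odds_diff[simp]: "odds (x - y) = odds x - odds y" by (rule ext) simp
lemma evens_uminus[simp]: "evens (- x) = - evens x" by (rule ext) simp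
lemma odds_uminus[simp]: "odds (- x) = - odds x" by (rule ext) simp
lemma evens_csc[simp]: "evens (csc c x) = csc c (evens x)" by (rule ext) simp
lemma odds_csc[simp]: "odds (csc c x) = csc c (odds x)" by (rule ext) simp
lemma evens_zero[simp]: "evens 0 = 0" by (rule ext) simp
lemma odds_zero[simp]: "odds 0 = 0" by (rule ext) simp

lemma sum_split_eo:
  fixes f :: "nat \<Rightarrow> 'a::comm_monoid_add"
  shows "(\<Sum>i<N. f i) = (\<Sum>i<(N+1) div 2. f (2*i)) + (\<Sum>i<N div 2. f (2*i+1))"
proof (induction N)
  case 0 show ?case by simp
next
  case (Suc N)
  show ?case
  proof (cases "even N")
    case True
    then obtain k where k: "N = 2*k" by (auto elim: evenE)
    have d: "(Suc N + 1) div 2 = Suc k" "(N + 1) div 2 = k" "Suc N div 2 = k" "N div 2 = k" using k by auto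
    have "(\<Sum>i<Suc N. f i) = (\<Sum>i<N. f i) + f (2*k)" using k by simp
    also have "\<dots> = ((\<Sum>i<k. f (2*i)) + f (2*k)) + (\<Sum>i<k. f (2*i+1))"
      using Suc.IH d by (simp add: ac_simps)
    also have "\<dots> = (\<Sum>i<(Suc N + 1) div 2. f (2*i)) + (\<Sum>i<Suc N div 2. f (2*i+1))"
      using d by simp
    finally show ?thesis .
  next
    case False
    then obtain k where k: "N = 2*k+1" by (auto elim: oddE)
    have d: "(Suc N + 1) div 2 = Suc k" "(N + 1) div 2 = Suc k" "Suc N div 2 = Suc k" "N div 2 = k" using k by auto
    have "(\<Sum>i<Suc N. f i) = (\<Sum>i<N. f i) + f (2*k+1)" using k by simp
    also have "\<dots> = (\<Sum>i<Suc k. f (2*i)) + ((\<Sum>i<k. f (2*i+1)) + f (2*k+1))"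
      using Suc.IH d by (simp add: ac_simps)
    also have "\<dots> = (\<Sum>i<(Suc N + 1) div 2. f (2*i)) + (\<Sum>i<Suc N div 2. f (2*i+1))"
      using d by simp
    finally show ?thesis .
  qed
qed

lemma suminf_eo:
  fixes f :: "nat \<Rightarrow> 'a::banach"
  assumes s: "summable (\<lambda>n. norm (f n))"
  shows "summable (\<lambda>n. f (2*n))" "summable (\<lambda>n. f (2*n+1))"
    "suminf f = (\<Sum>n. f (2*n)) + (\<Sum>n. f (2*n+1))"
proof -
  have i1: "inj (\<lambda>n::nat. 2*n)" by (simp add: inj_on_def)
  have i2: "inj (\<lambda>n::nat. 2*n+1)" by (simp add: inj_on_def)
  have "summable ((\<lambda>n. norm (f n)) \<circ> (\<lambda>n. 2*n))" by (rule summable_reindex[OF s i1]) simp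
  hence n1: "summable (\<lambda>n. norm (f (2*n)))" by (simp add: o_def)
  have "summable ((\<lambda>n. norm (f n)) \<circ> (\<lambda>n. 2*n+1))" by (rule summable_reindex[OF s i2]) simp
  hence n2: "summable (\<lambda>n. norm (f (2*n+1)))" by (simp add: o_def)
  show s1: "summable (\<lambda>n. f (2*n))" by (rule summable_norm_cancel[OF n1])
  show s2: "summable (\<lambda>n. f (2*n+1))" by (rule summable_norm_cancel[OF n2])
  have sf: "summable f" by (rule summable_norm_cancel[OF s])
  have "(\<lambda>n. (\<Sum>i<n. f (2*i)) + (\<Sum>i<n. f (2*i+1))) \<longlonglongrightarrow> (\<Sum>n. f (2*n)) + (\<Sum>n. f (2*n+1))"
    by (intro tendsto_add summable_LIMSEQ s1 s2)
  moreover have "(\<lambda>n. (\<Sum>i<n. f (2*i)) + (\<Sum>i<n. f (2*i+1))) = (\<lambda>n. \<Sum>i<2*n. f i)"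
  proof
    fix n
    have "(2*n+1) div 2 = n" "(2*n) div 2 = (n::nat)" by auto
    thus "(\<Sum>i<n. f (2*i)) + (\<Sum>i<n. f (2*i+1)) = (\<Sum>i<2*n. f i)"
      using sum_split_eo[of f "2*n"] by simp
  qed
  moreover have "(\<lambda>n. \<Sum>i<2*n. f i) \<longlonglongrightarrow> suminf f"
  proof -
    have "strict_mono (\<lambda>n::nat. 2*n)" by (simp add: strict_mono_def)
    from LIMSEQ_subseq_LIMSEQ[OF summable_LIMSEQ[OF sf] this] show ?thesis by (simp add: o_def)
  qed
  ultimately show "suminf f = (\<Sum>n. f (2*n)) + (\<Sum>n. f (2*n+1))"
    using LIMSEQ_unique by metis
qed

lemma nsq_split:
  assumes w: "w \<in> L2"
  shows "evens w \<in> L2" "odds w \<in> L2" "nsq w = nsq (evens w) + nsq (odds w)"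
proof -
  have s: "summable (\<lambda>n. norm ((cmod (w n))\<^sup>2))" using w by (simp add: L2_iff)
  note e = suminf_eo[OF s]
  show "evens w \<in> L2" using e(1) by (simp add: L2_iff)
  show "odds w \<in> L2" using e(2) by (simp add: L2_iff)
  show "nsq w = nsq (evens w) + nsq (odds w)" using e(3) by (simp add: nsq_def)
qed

lemma inner_split:
  assumes x: "x \<in> L2" and y: "y \<in> L2"
  shows "l2inner x y = l2inner (evens x) (evens y) + l2inner (odds x) (odds y)"
  using suminf_eo(3)[OF inner_abs_summable[OF x y]] by (simp add: l2inner_def)

lemma nsq_evens_le: "w \<in> L2 \<Longrightarrow> nsq (evens w) \<le> nsq w"
  using nsq_split[of w] nsq_nonneg[of "odds w"] by simp
lemma nsq_odds_le: "w \<in> L2 \<Longrightarrow> nsq (odds w) \<le> nsq w"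
  using nsq_split[of w] nsq_nonneg[of "evens w"] by simp

lemma L2_interleave:
  assumes f: "f \<in> L2" and g: "g \<in> L2"
  shows "interleave f g \<in> L2"
proof -
  let ?h = "\<lambda>n. (cmod (interleave f g n))\<^sup>2"
  have "(\<Sum>i<N. ?h i) \<le> nsq f + nsq g" for N
  proof -
    have "(\<Sum>i<N. ?h i) \<le> (\<Sum>i<2*N. ?h i)" by (rule sum_mono2) auto
    also have "\<dots> = (\<Sum>i<N. ?h (2*i)) + (\<Sum>i<N. ?h (2*i+1))"
    proof -
      have "(2*N+1) div 2 = N" "(2*N) div 2 = (N::nat)" by auto
      thus ?thesis using sum_split_eo[of ?h "2*N"] by simp
    qed
    also have "\<dots> = (\<Sum>i<N. (cmod (f i))\<^sup>2) + (\<Sum>i<N. (cmod (g i))\<^sup>2)" by simp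
    also have "\<dots> \<le> nsq f + nsq g" unfolding nsq_def using f g
      by (intro add_mono sum_le_suminf) (auto simp: L2_iff)
    finally show ?thesis .
  qed
  hence "summable ?h" by (intro summableI_nonneg_bounded[where x="nsq f + nsq g"]) auto
  thus ?thesis by (simp add: L2_iff)
qed

section \<open>Slices and the infinite amplification space\<close>

definition slice :: "nat \<Rightarrow> cseq \<Rightarrow> cseq" where "slice k w = evens ((odds ^^ k) w)"
definition Hy :: "cseq set \<Rightarrow> cseq set" where "Hy H = {w \<in> L2. \<forall>k. slice k w \<in> H}"

lemma slice_0: "slice 0 w = evens w" by (simp add: slice_def)
lemma slice_Suc: "slice (Suc k) w = slice k (odds w)" unfolding slice_def funpow_Suc_right by simp

lemma odds_pow_Suc: "(odds ^^ Suc k) w = (odds ^^ k) (odds w)" unfolding funpow_Suc_right by simp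

lemma odds_pow_L2: "w \<in> L2 \<Longrightarrow> (odds ^^ k) w \<in> L2"
  by (induction k) (auto intro: nsq_split)

lemma odds_pow_nsq: "w \<in> L2 \<Longrightarrow> nsq ((odds ^^ k) w) \<le> nsq w"
proof (induction k)
  case 0 show ?case by simp
next
  case (Suc k)
  have "nsq ((odds ^^ Suc k) w) \<le> nsq ((odds ^^ k) w)" unfolding funpow.simps(2) o_apply
    by (rule nsq_odds_le[OF odds_pow_L2[OF Suc.prems]])
  thus ?case using Suc.IH[OF Suc.prems] by (rule order_trans)
qed

lemma slice_L2: "w \<in> L2 \<Longrightarrow> slice k w \<in> L2"
  unfolding slice_def by (rule nsq_split(1)[OF odds_pow_L2])

lemma slice_nsq: "w \<in> L2 \<Longrightarrow> nsq (slice k w) \<le> nsq w"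
  unfolding slice_def using nsq_evens_le[OF odds_pow_L2] odds_pow_nsq order_trans by blast

lemma odds_pow_add: "(odds ^^ k) (x + y) = (odds ^^ k) x + (odds ^^ k) y"
  by (induction k) auto
lemma odds_pow_diff: "(odds ^^ k) (x - y) = (odds ^^ k) x - (odds ^^ k) y"
  by (induction k) auto
lemma odds_pow_csc: "(odds ^^ k) (csc c x) = csc c ((odds ^^ k) x)"
  by (induction k) auto
lemma odds_pow_zero: "(odds ^^ k) 0 = 0"
  by (induction k) auto

lemma slice_add: "slice k (x + y) = slice k x + slice k y" by (simp add: slice_def odds_pow_add)
lemma slice_diff: "slice k (x - y) = slice k x - slice k y" by (simp add: slice_def odds_pow_diff)
lemma slice_csc: "slice k (csc c x) = csc c (slice k x)" by (simp add: slice_def odds_pow_csc)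
lemma slice_zero: "slice k 0 = 0" by (simp add: slice_def odds_pow_zero)

lemma Hy_iff: "w \<in> Hy H \<longleftrightarrow> w \<in> L2 \<and> evens w \<in> H \<and> odds w \<in> Hy H"
proof
  assume w: "w \<in> Hy H"
  hence wL: "w \<in> L2" and sl: "\<And>k. slice k w \<in> H" by (auto simp: Hy_def)
  have "evens w \<in> H" using sl[of 0] by (simp add: slice_0)
  moreover have "odds w \<in> Hy H" unfolding Hy_def using nsq_split(2)[OF wL] sl by (auto simp: slice_Suc[symmetric])
  ultimately show "w \<in> L2 \<and> evens w \<in> H \<and> odds w \<in> Hy H" using wL by blast
next
  assume h: "w \<in> L2 \<and> evens w \<in> H \<and> odds w \<in> Hy H"
  have "slice k w \<in> H" for k
  proof (cases k)
    case 0 thus ?thesis using h by (simp add: slice_0)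
  next
    case (Suc k') thus ?thesis using h by (simp add: slice_Suc Hy_def)
  qed
  thus "w \<in> Hy H" using h by (simp add: Hy_def)
qed

lemma Hy_L2: "w \<in> Hy H \<Longrightarrow> w \<in> L2" by (simp add: Hy_def)
lemma Hy_evens: "w \<in> Hy H \<Longrightarrow> evens w \<in> H" using Hy_iff by blast
lemma Hy_odds: "w \<in> Hy H \<Longrightarrow> odds w \<in> Hy H" using Hy_iff by blast
lemma Hy_odds_pow: "w \<in> Hy H \<Longrightarrow> (odds ^^ k) w \<in> Hy H"
  by (induction k) (auto intro: Hy_odds)

lemma Hy_interleave:
  assumes H: "closed_subspace H" and f: "f \<in> H" and g: "g \<in> Hy H"
  shows "interleave f g \<in> Hy H"
  using Hy_iff[of "interleave f g" H] f g L2_interleave[OF cs_L2[OF H f] Hy_L2[OF g]] by simp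

lemma Hs_dsum_Hy:
  assumes H: "closed_subspace H"
  shows "{interleave f g | f g. f \<in> H \<and> g \<in> Hy H} = Hy H"
proof
  show "{interleave f g | f g. f \<in> H \<and> g \<in> Hy H} \<subseteq> Hy H" using Hy_interleave[OF H] by blast
  show "Hy H \<subseteq> {interleave f g | f g. f \<in> H \<and> g \<in> Hy H}"
  proof
    fix w assume w: "w \<in> Hy H"
    have "w = interleave (evens w) (odds w)" by (simp add: interleave_eo)
    thus "w \<in> {interleave f g | f g. f \<in> H \<and> g \<in> Hy H}" using Hy_evens[OF w] Hy_odds[OF w] by blast
  qed
qed

lemma Hy_closed:
  assumes H: "closed_subspace H"
  shows "closed_subspace (Hy H)"
  unfolding closed_subspace_def
proof (intro conjI allI ballI impI)
  show "Hy H \<subseteq> L2" by (auto simp: Hy_def)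
  show "0 \<in> Hy H" by (simp add: Hy_def slice_zero cs_zero[OF H])
  fix x y assume x: "x \<in> Hy H" and y: "y \<in> Hy H"
  show "x + y \<in> Hy H" using x y by (auto simp: Hy_def slice_add intro: cs_add[OF H] L2_add)
next
  fix c x assume x: "x \<in> Hy H"
  show "csc c x \<in> Hy H" using x by (auto simp: Hy_def slice_csc intro: cs_csc[OF H] L2_csc)
next
  fix s y assume a: "(\<forall>n. s n \<in> Hy H) \<and> y \<in> L2 \<and> (\<lambda>n. l2norm (s n - y)) \<longlonglongrightarrow> 0"
  have sL: "\<And>n. s n \<in> L2" using a by (auto simp: Hy_def)
  have "slice k y \<in> H" for k
  proof (rule cs_closed[OF H, of "\<lambda>n. slice k (s n)"])
    show "\<And>n. slice k (s n) \<in> H" using a by (auto simp: Hy_def)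
    show "slice k y \<in> L2" using a slice_L2 by blast
    show "(\<lambda>n. l2norm (slice k (s n) - slice k y)) \<longlonglongrightarrow> 0"
    proof (rule Lim_null_comparison[OF _ conjunct2[OF conjunct2[OF a]]])
      show "\<forall>\<^sub>F n in sequentially. norm (l2norm (slice k (s n) - slice k y)) \<le> l2norm (s n - y)"
      proof (rule always_eventually, rule allI)
        fix n
        have dL: "s n - y \<in> L2" using sL a L2_diff by blast
        have "l2norm (slice k (s n) - slice k y) = l2norm (slice k (s n - y))" by (simp add: slice_diff)
        also have "\<dots> \<le> l2norm (s n - y)" unfolding l2norm_nsq
          by (rule real_sqrt_le_mono[OF slice_nsq[OF dL]])
        finally show "norm (l2norm (slice k (s n) - slice k y)) \<le> l2norm (s n - y)"
          using l2norm_nonneg[OF slice_L2[OF dL]] by (simp add: slice_diff)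
      qed
    qed
  qed
  thus "y \<in> Hy H" using a by (simp add: Hy_def)
qed

lemma seq_eqI:
  assumes sig: "\<And>a. a \<in> A \<Longrightarrow> \<sigma> a \<in> A"
    and ev: "\<And>a. a \<in> A \<Longrightarrow> evens (F a) = evens (G a)"
    and oF: "\<And>a. a \<in> A \<Longrightarrow> odds (F a) = F (\<sigma> a)"
    and oG: "\<And>a. a \<in> A \<Longrightarrow> odds (G a) = G (\<sigma> a)"
    and a: "a \<in> A"
  shows "F a = G a"
proof -
  have "\<forall>a\<in>A. F a n = G a n" for n
  proof (induction n rule: less_induct)
    case (less n)
    show ?case
    proof
      fix a assume a: "a \<in> A"
      show "F a n = G a n"
      proof (cases "even n")
        case True then obtain m where n: "n = 2*m" by (auto elim: evenE)
        have "F a n = evens (F a) m" using n by simp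
        also have "\<dots> = evens (G a) m" using ev[OF a] by simp
        also have "\<dots> = G a n" using n by simp
        finally show ?thesis .
      next
        case False then obtain m where n: "n = 2*m+1" by (auto elim: oddE)
        have "F a n = odds (F a) m" using n by simp
        also have "\<dots> = F (\<sigma> a) m" using oF[OF a] by simp
        also have "\<dots> = G (\<sigma> a) m" using less.IH[of m] n sig[OF a] by auto
        also have "\<dots> = odds (G a) m" using oG[OF a] by simp
        also have "\<dots> = G a n" using n by simp
        finally show ?thesis .
      qed
    qed
  qed
  thus ?thesis using a by auto
qed

section \<open>The amplified operator\<close>

function sw :: "op \<Rightarrow> cseq \<Rightarrow> nat \<Rightarrow> complex" where
  "sw T w n = (if even n then T (evens w) (n div 2) else sw T (odds w) (n div 2))"
  by auto
termination by (relation "Wellfounded.measure (\<lambda>(T, w, n). n)") (auto elim: oddE)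

declare sw.simps[simp del]

lemma evens_sw[simp]: "evens (sw T w) = T (evens w)"
proof (rule ext)
  fix n show "evens (sw T w) n = T (evens w) n"
    by (simp only: evens_apply, subst sw.simps, simp)
qed

lemma odds_sw[simp]: "odds (sw T w) = sw T (odds w)"
proof (rule ext)
  fix n show "odds (sw T w) n = sw T (odds w) n"
    by (simp only: odds_apply, subst sw.simps, simp)
qed

lemma sw_even: "sw T w (2*m) = T (evens w) m"
  using fun_cong[OF evens_sw[of T w], of m] by (simp only: evens_apply)
lemma sw_odd: "sw T w (2*m+1) = sw T (odds w) m"
  using fun_cong[OF odds_sw[of T w], of m] by (simp only: odds_apply)

lemma dsum_op_sw: "dsum_op T (sw T) = sw T"
proof (intro ext)
  fix w n
  have d: "dsum_op T (sw T) w n = interleave (T (evens w)) (sw T (odds w)) n" by (simp add: dsum_op_def)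
  show "dsum_op T (sw T) w n = sw T w n"
  proof (cases "even n")
    case True then obtain m where "n = 2*m" by (auto elim: evenE)
    thus ?thesis unfolding d by (simp only: interleave_even sw_even)
  next
    case False then obtain m where "n = 2*m+1" by (auto elim: oddE)
    thus ?thesis unfolding d by (simp only: interleave_odd sw_odd)
  qed
qed

lemma slice_sw: "slice k (sw T w) = T (slice k w)"
proof (induction k arbitrary: w)
  case 0 show ?case by (simp only: slice_0 evens_sw)
next
  case (Suc k) show ?case by (simp only: slice_Suc odds_sw Suc.IH)
qed

lemma bounded_nsq:
  assumes H: "closed_subspace H" and T: "bounded_on H T"
  obtains C where "C \<ge> 0" "\<And>x. x \<in> H \<Longrightarrow> nsq (T x) \<le> C\<^sup>2 * nsq x"
proof -
  obtain C where C0: "C \<ge> 0" and C: "\<forall>x\<in>H. l2norm (T x) \<le> C * l2norm x"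
    using bounded_onD(4)[OF H T] by blast
  have "nsq (T x) \<le> C\<^sup>2 * nsq x" if x: "x \<in> H" for x
  proof -
    have TL: "T x \<in> L2" using bounded_onD(1)[OF H T x] cs_L2[OF H] by blast
    have xL: "x \<in> L2" using cs_L2[OF H x] .
    have "(l2norm (T x))\<^sup>2 \<le> (C * l2norm x)\<^sup>2"
      by (rule power_mono) (use C x l2norm_nonneg[OF TL] in auto)
    thus ?thesis using nsq_eq[OF TL] nsq_eq[OF xL] by (simp add: power_mult_distrib)
  qed
  thus ?thesis using C0 that by blast
qed

lemma sw_nsq:
  assumes H: "closed_subspace H" and C0: "C \<ge> 0" and C: "\<And>x. x \<in> H \<Longrightarrow> nsq (T x) \<le> C\<^sup>2 * nsq x"
    and TH: "\<And>x. x \<in> H \<Longrightarrow> T x \<in> H"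
  shows "\<And>w. w \<in> Hy H \<Longrightarrow> sw T w \<in> L2 \<and> nsq (sw T w) \<le> C\<^sup>2 * nsq w"
proof -
  have ps: "\<forall>w\<in>Hy H. (\<Sum>n<N. (cmod (sw T w n))\<^sup>2) \<le> C\<^sup>2 * nsq w" for N
  proof (induction N rule: less_induct)
    case (less N)
    show ?case
    proof
      fix w assume w: "w \<in> Hy H"
      have wL: "w \<in> L2" using Hy_L2[OF w] .
      show "(\<Sum>n<N. (cmod (sw T w n))\<^sup>2) \<le> C\<^sup>2 * nsq w"
      proof (cases "N = 0")
        case True thus ?thesis using nsq_nonneg[OF wL] by simp
      next
        case False
        note ev = sw_even[of T w] and od = sw_odd[of T w]
        have eH: "evens w \<in> H" using Hy_evens[OF w] .
        have TeL: "T (evens w) \<in> L2" using cs_L2[OF H TH[OF eH]] .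
        have oH: "odds w \<in> Hy H" using Hy_odds[OF w] .
        have "(\<Sum>n<N. (cmod (sw T w n))\<^sup>2)
            = (\<Sum>i<(N+1) div 2. (cmod (sw T w (2*i)))\<^sup>2) + (\<Sum>i<N div 2. (cmod (sw T w (2*i+1)))\<^sup>2)"
          by (rule sum_split_eo)
        also have "\<dots> = (\<Sum>i<(N+1) div 2. (cmod (T (evens w) i))\<^sup>2) + (\<Sum>i<N div 2. (cmod (sw T (odds w) i))\<^sup>2)"
          by (simp only: ev od)
        also have "\<dots> \<le> nsq (T (evens w)) + C\<^sup>2 * nsq (odds w)"
        proof (rule add_mono)
          show "(\<Sum>i<(N+1) div 2. (cmod (T (evens w) i))\<^sup>2) \<le> nsq (T (evens w))"
            unfolding nsq_def using TeL by (intro sum_le_suminf) (auto simp: L2_iff)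
          have "N div 2 < N" using False by simp
          thus "(\<Sum>i<N div 2. (cmod (sw T (odds w) i))\<^sup>2) \<le> C\<^sup>2 * nsq (odds w)"
            using less.IH oH by blast
        qed
        also have "\<dots> \<le> C\<^sup>2 * nsq (evens w) + C\<^sup>2 * nsq (odds w)" using C[OF eH] by simp
        also have "\<dots> = C\<^sup>2 * nsq w" using nsq_split(3)[OF wL] by (simp add: algebra_simps)
        finally show ?thesis .
      qed
    qed
  qed
  fix w assume w: "w \<in> Hy H"
  have sm: "summable (\<lambda>n. (cmod (sw T w n))\<^sup>2)"
    by (rule summableI_nonneg_bounded[where x="C\<^sup>2 * nsq w"]) (use ps w in auto)
  hence "sw T w \<in> L2" by (simp add: L2_iff)
  moreover have "nsq (sw T w) \<le> C\<^sup>2 * nsq w" unfolding nsq_def[of "sw T w"]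
    by (rule suminf_le_const[OF sm]) (use ps w in auto)
  ultimately show "sw T w \<in> L2 \<and> nsq (sw T w) \<le> C\<^sup>2 * nsq w" by blast
qed

lemma sw_maps:
  assumes H: "closed_subspace H" and T: "bounded_on H T" and w: "w \<in> Hy H"
  shows "sw T w \<in> Hy H"
proof -
  obtain C where C0: "C \<ge> 0" and C: "\<And>x. x \<in> H \<Longrightarrow> nsq (T x) \<le> C\<^sup>2 * nsq x"
    using bounded_nsq[OF H T] by blast
  have "sw T w \<in> L2" using sw_nsq[OF H C0 C bounded_onD(1)[OF H T] w] by blast
  moreover have "slice k (sw T w) \<in> H" for k
    unfolding slice_sw using w by (intro bounded_onD(1)[OF H T]) (simp add: Hy_def)
  ultimately show ?thesis by (simp add: Hy_def)
qed

lemma sw_bound: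
  assumes H: "closed_subspace H" and T: "bounded_on H T"
  obtains C where "C \<ge> 0" "\<And>w. w \<in> Hy H \<Longrightarrow> l2norm (sw T w) \<le> C * l2norm w"
proof -
  obtain C where C0: "C \<ge> 0" and C: "\<And>x. x \<in> H \<Longrightarrow> nsq (T x) \<le> C\<^sup>2 * nsq x"
    using bounded_nsq[OF H T] by blast
  have "l2norm (sw T w) \<le> C * l2norm w" if w: "w \<in> Hy H" for w
  proof -
    have "nsq (sw T w) \<le> C\<^sup>2 * nsq w" using sw_nsq[OF H C0 C bounded_onD(1)[OF H T] w] by blast
    hence "sqrt (nsq (sw T w)) \<le> sqrt (C\<^sup>2 * nsq w)" by (rule real_sqrt_le_mono)
    thus ?thesis using C0 by (simp add: l2norm_nsq real_sqrt_mult)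
  qed
  thus ?thesis using C0 that by blast
qed

lemma sw_add:
  assumes H: "closed_subspace H" and T: "bounded_on H T" and x: "x \<in> Hy H" and y: "y \<in> Hy H"
  shows "sw T (x + y) = sw T x + sw T y"
proof -
  let ?A = "Hy H \<times> Hy H"
  have "(\<lambda>(x, y). sw T (x + y)) (x, y) = (\<lambda>(x, y). sw T x + sw T y) (x, y)"
  proof (rule seq_eqI[where A="?A" and \<sigma>="\<lambda>(x, y). (odds x, odds y)"])
    show "(x, y) \<in> ?A" using x y by simp
    fix a assume a: "a \<in> ?A"
    then obtain u v where a': "a = (u, v)" "u \<in> Hy H" "v \<in> Hy H" by blast
    show "(\<lambda>(x, y). (odds x, odds y)) a \<in> ?A" using a' Hy_odds by auto
    show "evens ((\<lambda>(x, y). sw T (x + y)) a) = evens ((\<lambda>(x, y). sw T x + sw T y) a)"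
      by (simp only: a'(1) prod.case evens_sw evens_add bounded_onD(2)[OF H T Hy_evens[OF a'(2)] Hy_evens[OF a'(3)]])
    show "odds ((\<lambda>(x, y). sw T (x + y)) a) = (\<lambda>(x, y). sw T (x + y)) ((\<lambda>(x, y). (odds x, odds y)) a)"
      by (simp only: a'(1) prod.case odds_sw odds_add)
    show "odds ((\<lambda>(x, y). sw T x + sw T y) a) = (\<lambda>(x, y). sw T x + sw T y) ((\<lambda>(x, y). (odds x, odds y)) a)"
      by (simp only: a'(1) prod.case odds_sw odds_add)
  qed
  thus ?thesis by (simp only: prod.case)
qed

lemma sw_csc:
  assumes H: "closed_subspace H" and T: "bounded_on H T" and x: "x \<in> Hy H"
  shows "sw T (csc c x) = csc c (sw T x)"
proof (rule seq_eqI[where A="Hy H" and \<sigma>=odds and F="\<lambda>x. sw T (csc c x)" and G="\<lambda>x. csc c (sw T x)"])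
  fix a assume a: "a \<in> Hy H"
  show "odds a \<in> Hy H" by (rule Hy_odds[OF a])
  show "evens (sw T (csc c a)) = evens (csc c (sw T a))"
    by (simp only: evens_sw evens_csc bounded_onD(3)[OF H T Hy_evens[OF a]])
  show "odds (sw T (csc c a)) = sw T (csc c (odds a))" by (simp only: odds_sw odds_csc)
  show "odds (csc c (sw T a)) = csc c (sw T (odds a))" by (simp only: odds_sw odds_csc)
qed (rule x)

lemma sw_bounded_on:
  assumes H: "closed_subspace H" and T: "bounded_on H T"
  shows "bounded_on (Hy H) (sw T)"
proof -
  obtain C where "C \<ge> 0" "\<And>w. w \<in> Hy H \<Longrightarrow> l2norm (sw T w) \<le> C * l2norm w"
    using sw_bound[OF H T] by blast
  thus ?thesis unfolding bounded_on_def
    using sw_maps[OF H T] sw_add[OF H T] sw_csc[OF H T] by blast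
qed

section \<open>Adjoints of amplified operators\<close>

lemma odds_pow_apply: "(odds ^^ k) w j = w (2^k * j + (2^k - 1))"
proof (induction k arbitrary: j)
  case 0 show ?case by simp
next
  case (Suc k)
  have "(odds ^^ Suc k) w j = (odds ^^ k) w (2*j+1)" by (simp only: funpow.simps(2) o_apply odds_apply)
  also have "\<dots> = w (2^k * (2*j+1) + (2^k - 1))" by (rule Suc.IH)
  also have "2^k * (2*j+1) + (2^k - 1) = 2^(Suc k) * j + (2^(Suc k) - (1::nat))"
  proof -
    have "(2::nat)^k > 0" by simp
    then obtain M where M: "(2::nat)^k = Suc M" using gr0_conv_Suc by blast
    show ?thesis by (simp add: M algebra_simps)
  qed
  finally show ?case .
qed

lemma tail_small:
  assumes w: "w \<in> L2" and e: "e > 0"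
  shows "\<exists>k. nsq ((odds ^^ k) w) < e"
proof -
  let ?f = "\<lambda>n. (cmod (w n))\<^sup>2"
  have sf: "summable ?f" using w by (simp add: L2_iff)
  obtain N where N: "\<forall>n\<ge>N. norm (\<Sum>i. ?f (i + n)) < e" using suminf_exist_split[OF e sf] by blast
  define m where "m = (2::nat)^N - 1"
  have mN: "m \<ge> N" unfolding m_def using less_exp[of N] by linarith
  have sg: "summable (\<lambda>i. ?f (i + m))" using summable_ignore_initial_segment[OF sf] .
  have inj: "inj (\<lambda>j::nat. 2^N * j)" by (simp add: inj_on_def)
  have "nsq ((odds ^^ N) w) = (\<Sum>j. ?f (2^N * j + m))" unfolding nsq_def odds_pow_apply m_def ..
  also have "\<dots> = suminf ((\<lambda>i. ?f (i + m)) \<circ> (\<lambda>j. 2^N * j))" by (simp add: o_def)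
  also have "\<dots> \<le> (\<Sum>i. ?f (i + m))" by (rule suminf_reindex_mono[OF sg inj]) simp
  also have "\<dots> \<le> norm (\<Sum>i. ?f (i + m))" by simp
  also have "\<dots> < e" using N mN by blast
  finally show ?thesis by blast
qed

lemma odds_pow_l2norm: "w \<in> L2 \<Longrightarrow> l2norm ((odds ^^ k) w) \<le> l2norm w"
  unfolding l2norm_nsq by (rule real_sqrt_le_mono[OF odds_pow_nsq])

lemma sw_adjoint:
  assumes H: "closed_subspace H" and T: "bounded_on H T" and S: "bounded_on H S"
    and TS: "\<And>u v. u \<in> H \<Longrightarrow> v \<in> H \<Longrightarrow> l2inner (T u) v = l2inner u (S v)"
    and w: "w \<in> Hy H" and v: "v \<in> Hy H"
  shows "l2inner (sw T w) v = l2inner w (sw S v)"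
proof -
  define D where "D a b = l2inner (sw T a) b - l2inner a (sw S b)" for a b
  have step: "D a b = D (odds a) (odds b)" if a: "a \<in> Hy H" and b: "b \<in> Hy H" for a b
  proof -
    have aL: "a \<in> L2" and bL: "b \<in> L2" using a b Hy_L2 by auto
    have TaL: "sw T a \<in> L2" using Hy_L2[OF sw_maps[OF H T a]] .
    have SbL: "sw S b \<in> L2" using Hy_L2[OF sw_maps[OF H S b]] .
    have e1: "l2inner (sw T a) b = l2inner (T (evens a)) (evens b) + l2inner (sw T (odds a)) (odds b)"
      using inner_split[OF TaL bL] by (simp only: evens_sw odds_sw)
    have e2: "l2inner a (sw S b) = l2inner (evens a) (S (evens b)) + l2inner (odds a) (sw S (odds b))"
      using inner_split[OF aL SbL] by (simp only: evens_sw odds_sw)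
    have e3: "l2inner (T (evens a)) (evens b) = l2inner (evens a) (S (evens b))"
      by (rule TS[OF Hy_evens[OF a] Hy_evens[OF b]])
    show ?thesis unfolding D_def e1 e2 e3 by simp
  qed
  have iter: "\<forall>a b. a \<in> Hy H \<longrightarrow> b \<in> Hy H \<longrightarrow> D a b = D ((odds ^^ k) a) ((odds ^^ k) b)" for k
  proof (induction k)
    case 0 show ?case by simp
  next
    case (Suc k)
    show ?case
    proof (intro allI impI)
      fix a b assume a: "a \<in> Hy H" and b: "b \<in> Hy H"
      have "D a b = D (odds a) (odds b)" by (rule step[OF a b])
      also have "\<dots> = D ((odds ^^ k) (odds a)) ((odds ^^ k) (odds b))"
        using Suc.IH Hy_odds[OF a] Hy_odds[OF b] by blast
      finally show "D a b = D ((odds ^^ Suc k) a) ((odds ^^ Suc k) b)" by (simp only: odds_pow_Suc)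
    qed
  qed
  obtain CT where CT0: "CT \<ge> 0" and CT: "\<And>x. x \<in> Hy H \<Longrightarrow> l2norm (sw T x) \<le> CT * l2norm x"
    using sw_bound[OF H T] by blast
  obtain CS where CS0: "CS \<ge> 0" and CS: "\<And>x. x \<in> Hy H \<Longrightarrow> l2norm (sw S x) \<le> CS * l2norm x"
    using sw_bound[OF H S] by blast
  have Dbound: "cmod (D a b) \<le> (CT + CS) * (l2norm a * l2norm b)" if a: "a \<in> Hy H" and b: "b \<in> Hy H" for a b
  proof -
    have aL: "a \<in> L2" and bL: "b \<in> L2" using a b Hy_L2 by auto
    have TaL: "sw T a \<in> L2" using Hy_L2[OF sw_maps[OF H T a]] .
    have SbL: "sw S b \<in> L2" using Hy_L2[OF sw_maps[OF H S b]] .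
    have na: "0 \<le> l2norm a" and nb: "0 \<le> l2norm b" using l2norm_nonneg aL bL by auto
    have "cmod (l2inner (sw T a) b) \<le> l2norm (sw T a) * l2norm b" by (rule cauchy_schwarz[OF TaL bL])
    also have "\<dots> \<le> (CT * l2norm a) * l2norm b" by (rule mult_right_mono[OF CT[OF a] nb])
    finally have i1: "cmod (l2inner (sw T a) b) \<le> CT * (l2norm a * l2norm b)" by (simp add: ac_simps)
    have "cmod (l2inner a (sw S b)) \<le> l2norm a * l2norm (sw S b)" by (rule cauchy_schwarz[OF aL SbL])
    also have "\<dots> \<le> l2norm a * (CS * l2norm b)" by (rule mult_left_mono[OF CS[OF b] na])
    finally have i2: "cmod (l2inner a (sw S b)) \<le> CS * (l2norm a * l2norm b)" by (simp add: ac_simps)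
    have "cmod (D a b) \<le> cmod (l2inner (sw T a) b) + cmod (l2inner a (sw S b))"
      unfolding D_def by (rule norm_triangle_ineq4)
    thus ?thesis using i1 i2 by (simp add: algebra_simps)
  qed
  have wL: "w \<in> L2" and vL: "v \<in> L2" using w v Hy_L2 by auto
  have small: "cmod (D w v) \<le> e" if e: "e > 0" for e
  proof -
    define K where "K = (CT + CS) * l2norm v + 1"
    have "0 \<le> (CT + CS) * l2norm v" using CT0 CS0 l2norm_nonneg[OF vL] by simp
    hence K: "K > 0" unfolding K_def by simp
    obtain k where k: "nsq ((odds ^^ k) w) < (e / K)\<^sup>2" using tail_small[OF wL, of "(e/K)\<^sup>2"] e K by auto
    have kL: "(odds ^^ k) w \<in> L2" by (rule odds_pow_L2[OF wL])
    have kn: "l2norm ((odds ^^ k) w) < e / K"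
    proof -
      have "sqrt (nsq ((odds ^^ k) w)) < sqrt ((e / K)\<^sup>2)" by (rule real_sqrt_less_mono[OF k])
      thus ?thesis using e K by (simp add: l2norm_nsq)
    qed
    have n0: "0 \<le> l2norm ((odds ^^ k) w)" by (rule l2norm_nonneg[OF kL])
    have "cmod (D w v) = cmod (D ((odds ^^ k) w) ((odds ^^ k) v))" using iter w v by metis
    also have "\<dots> \<le> (CT + CS) * (l2norm ((odds ^^ k) w) * l2norm ((odds ^^ k) v))"
      by (rule Dbound) (use Hy_odds_pow w v in auto)
    also have "\<dots> \<le> (CT + CS) * (l2norm ((odds ^^ k) w) * l2norm v)"
      using CT0 CS0 n0 odds_pow_l2norm[OF vL, of k] by (intro mult_left_mono) auto
    also have "\<dots> = l2norm ((odds ^^ k) w) * ((CT + CS) * l2norm v)" by (simp add: ac_simps)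
    also have "\<dots> \<le> l2norm ((odds ^^ k) w) * K" unfolding K_def using n0 by (intro mult_left_mono) auto
    also have "\<dots> \<le> (e / K) * K" using kn K by (intro mult_right_mono) auto
    also have "\<dots> = e" using K by simp
    finally show ?thesis .
  qed
  have "cmod (D w v) = 0"
  proof (rule ccontr)
    assume "cmod (D w v) \<noteq> 0"
    hence "cmod (D w v) > 0" by simp
    hence "cmod (D w v) \<le> cmod (D w v) / 2" by (intro small) simp
    thus False using \<open>cmod (D w v) > 0\<close> by simp
  qed
  thus ?thesis unfolding D_def by simp
qed



lemma sw_general_eq:
  assumes "\<And>w. evens (F w) = evens (G w)" "\<And>w. odds (F w) = F (odds w)" "\<And>w. odds (G w) = G (odds w)"
  shows "F w = G w"
  by (rule seq_eqI[where A=UNIV and \<sigma>=odds and F=F and G=G]) (use assms in auto)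

lemma sw_id: "sw (\<lambda>x. x) w = w"
  by (rule sw_general_eq[where F="sw (\<lambda>x. x)" and G="\<lambda>w. w"]) (simp_all only: evens_sw odds_sw)

lemma sw_zero_op: "sw (\<lambda>x. 0) w = 0"
  by (rule sw_general_eq[where F="sw (\<lambda>x. 0)" and G="\<lambda>w. 0"]) (simp_all only: evens_sw odds_sw evens_zero odds_zero)

lemma sw_neg_op: "sw (\<lambda>x. - T x) w = - sw T w"
  by (rule sw_general_eq[where F="sw (\<lambda>x. - T x)" and G="\<lambda>w. - sw T w"]) (simp_all only: evens_sw odds_sw evens_uminus odds_uminus)

lemma sw_plus_op: "sw (\<lambda>x. T x + S x) w = sw T w + sw S w"
  by (rule sw_general_eq[where F="sw (\<lambda>x. T x + S x)" and G="\<lambda>w. sw T w + sw S w"]) (simp_all only: evens_sw odds_sw evens_add odds_add)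

lemma sw_comp: "sw T (sw S w) = sw (\<lambda>x. T (S x)) w"
  by (rule sw_general_eq[where F="\<lambda>w. sw T (sw S w)" and G="sw (\<lambda>x. T (S x))"]) (simp_all only: evens_sw odds_sw)

lemma sw_cong:
  assumes "\<And>x. x \<in> H \<Longrightarrow> T x = S x" and w: "w \<in> Hy H"
  shows "sw T w = sw S w"
  by (rule seq_eqI[where A="Hy H" and \<sigma>=odds and F="sw T" and G="sw S"])
     (use assms Hy_odds Hy_evens in \<open>simp_all only: evens_sw odds_sw\<close>)

lemma bounded_on_neg:
  assumes H: "closed_subspace H" and T: "bounded_on H T"
  shows "bounded_on H (\<lambda>x. - T x)"
proof -
  obtain C where C: "\<forall>x\<in>H. l2norm (T x) \<le> C * l2norm x" using T by (auto simp: bounded_on_def)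
  have "\<forall>x\<in>H. l2norm (- T x) \<le> C * l2norm x"
    using C bounded_onD(1)[OF H T] cs_L2[OF H] l2norm_uminus by metis
  moreover have "\<forall>x\<in>H. - T x \<in> H" using bounded_onD(1)[OF H T] cs_uminus[OF H] by blast
  moreover have "\<forall>x\<in>H. \<forall>y\<in>H. - T (x + y) = - T x + - T y" using bounded_onD(2)[OF H T] by simp
  moreover have "\<forall>c. \<forall>x\<in>H. - T (csc c x) = csc c (- T x)"
    using bounded_onD(3)[OF H T] by (simp add: fun_eq_iff)
  ultimately show ?thesis unfolding bounded_on_def by blast
qed

lemma sw_adj:
  assumes H: "closed_subspace H" and T: "bounded_on H T" and S: "bounded_on H S"
    and adjTS: "\<And>x. x \<in> H \<Longrightarrow> adj H T x = S x" and w: "w \<in> Hy H"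
  shows "adj (Hy H) (sw T) w = sw S w"
proof (rule adj_eqI[OF Hy_closed[OF H] sw_maps[OF H S w]])
  fix x assume x: "x \<in> Hy H"
  show "l2inner (sw T x) w = l2inner x (sw S w)"
    by (rule sw_adjoint[OF H T S _ x w]) (rule adj_prop(1)[OF H T adjTS])
qed

lemma compact_zero:
  assumes H: "closed_subspace H" and z: "\<And>x. x \<in> H \<Longrightarrow> T x = 0"
  shows "compact_on H T"
  unfolding compact_on_def
proof (intro allI impI)
  fix s :: "nat \<Rightarrow> cseq" and B :: real assume s: "\<forall>n. s n \<in> H \<and> l2norm (s n) \<le> B"
  have "strict_mono (id :: nat \<Rightarrow> nat)" by (simp add: strict_mono_def)
  moreover have "(\<lambda>n. l2norm (T (s (id n)) - 0)) \<longlonglongrightarrow> 0" using s z by simp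
  ultimately show "\<exists>r y. strict_mono r \<and> y \<in> H \<and> (\<lambda>n. l2norm (T (s (r n)) - y)) \<longlonglongrightarrow> 0"
    using cs_zero[OF H] by blast
qed

lemma compact_scale:
  assumes H: "closed_subspace H" and K: "compact_on H T" and TL: "\<And>x. x \<in> H \<Longrightarrow> T x \<in> L2"
    and eq: "\<And>x. x \<in> H \<Longrightarrow> T' x = csc c (T x)"
  shows "compact_on H T'"
  unfolding compact_on_def
proof (intro allI impI)
  fix s :: "nat \<Rightarrow> cseq" and B :: real assume s: "\<forall>n. s n \<in> H \<and> l2norm (s n) \<le> B"
  then obtain r y where r: "strict_mono r" and y: "y \<in> H" and lim: "(\<lambda>n. l2norm (T (s (r n)) - y)) \<longlonglongrightarrow> 0"
    using K unfolding compact_on_def by blast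
  have yL: "y \<in> L2" using cs_L2[OF H y] .
  have "l2norm (T' (s (r n)) - csc c y) = cmod c * l2norm (T (s (r n)) - y)" for n
  proof -
    have "T' (s (r n)) - csc c y = csc c (T (s (r n)) - y)" using eq s by (simp add: fun_eq_iff right_diff_distrib)
    thus ?thesis using l2norm_csc[OF L2_diff[OF TL yL]] s by simp
  qed
  hence "(\<lambda>n. l2norm (T' (s (r n)) - csc c y)) \<longlonglongrightarrow> 0"
    using tendsto_mult_right_zero[OF lim, of "cmod c"] by simp
  thus "\<exists>r y. strict_mono r \<and> y \<in> H \<and> (\<lambda>n. l2norm (T' (s (r n)) - y)) \<longlonglongrightarrow> 0"
    using r cs_csc[OF H y] by blast
qed

section \<open>The amplified module\<close>

definition swm :: "'a fmod \<Rightarrow> 'a fmod" where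
  "swm m = \<lparr>Hs = Hy (Hs m), gam = sw (gam m), rho = (\<lambda>a. sw (rho m a)), Fop = sw (Fop m), eps = (\<lambda>j. sw (eps m j))\<rparr>"

lemma swm_sel[simp]: "Hs (swm m) = Hy (Hs m)" "gam (swm m) = sw (gam m)" "rho (swm m) = (\<lambda>a. sw (rho m a))"
  "Fop (swm m) = sw (Fop m)" "eps (swm m) = (\<lambda>j. sw (eps m j))"
  by (simp_all add: swm_def)

lemma dsum_swm: "closed_subspace (Hs m) \<Longrightarrow> dsum m (swm m) = swm m"
  unfolding dsum_def by (simp add: Hs_dsum_Hy dsum_op_sw swm_def)

lemma pgraded_fmod_iff: "pgraded_fmod scC st p m \<longleftrightarrow>
     closed_subspace (Hs m) \<and>
     representation scC st (Hs m) (rho m) \<and>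
     bounded_on (Hs m) (Fop m) \<and>
     bounded_on (Hs m) (gam m) \<and> (\<forall>x\<in>Hs m. gam m (gam m x) = x) \<and> (\<forall>x\<in>Hs m. adj (Hs m) (gam m) x = gam m x) \<and>
     (\<forall>a. \<forall>x\<in>Hs m. gam m (rho m a x) = rho m a (gam m x)) \<and>
     (\<forall>x\<in>Hs m. Fop m (gam m x) = - gam m (Fop m x)) \<and>
     (\<forall>a. compact_on (Hs m) (\<lambda>x. Fop m (Fop m (rho m a x)) - rho m a x)) \<and>
     (\<forall>a. compact_on (Hs m) (\<lambda>x. Fop m (rho m a x) - adj (Hs m) (Fop m) (rho m a x))) \<and>
     (\<forall>a. compact_on (Hs m) (\<lambda>x. Fop m (rho m a x) - rho m a (Fop m x))) \<and>
     (\<forall>j<p. bounded_on (Hs m) (eps m j) \<and>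
        (\<forall>x\<in>Hs m. eps m j (gam m x) = - gam m (eps m j x)) \<and>
        (\<forall>x\<in>Hs m. adj (Hs m) (eps m j) x = - eps m j x) \<and>
        (\<forall>x\<in>Hs m. eps m j (eps m j x) = - x) \<and>
        (\<forall>i<p. i \<noteq> j \<longrightarrow> (\<forall>x\<in>Hs m. eps m i (eps m j x) + eps m j (eps m i x) = 0)) \<and>
        (\<forall>x\<in>Hs m. eps m j (Fop m x) = Fop m (eps m j x)) \<and>
        (\<forall>a. \<forall>x\<in>Hs m. eps m j (rho m a x) = rho m a (eps m j x)))"
  unfolding pgraded_fmod_def Let_def ..

lemma representation_iff: "representation scC st H r \<longleftrightarrow>
     (\<forall>a. bounded_on H (r a)) \<and>
     (\<forall>a b. \<forall>x\<in>H. r (a + b) x = r a x + r b x) \<and>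
     (\<forall>c a. \<forall>x\<in>H. r (scC c a) x = csc c (r a x)) \<and>
     (\<forall>a b. \<forall>x\<in>H. r (a * b) x = r a (r b x)) \<and>
     (\<forall>a. \<forall>x\<in>H. r (st a) x = adj H (r a) x)"
  unfolding representation_def ..

lemma pgraded_swm:
  assumes P: "pgraded_fmod scC st p m"
    and dF2: "\<And>x. x \<in> Hs m \<Longrightarrow> Fop m (Fop m x) = x"
    and dFadj: "\<And>x. x \<in> Hs m \<Longrightarrow> adj (Hs m) (Fop m) x = Fop m x"
    and dFr: "\<And>a x. x \<in> Hs m \<Longrightarrow> Fop m (rho m a x) = rho m a (Fop m x)"
  shows "pgraded_fmod scC st p (swm m)"
proof -
  define H where "H = Hs m"
  define g where "g = gam m"
  define r where "r = rho m"
  define F where "F = Fop m"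
  define e where "e = eps m"
  note P' = P[unfolded pgraded_fmod_iff, folded H_def g_def r_def F_def e_def]
  have H: "closed_subspace H" using P' by blast
  have R: "representation scC st H r" using P' by blast
  note R' = R[unfolded representation_iff]
  have Fb: "bounded_on H F" using P' by blast
  have gb: "bounded_on H g" using P' by blast
  have g2: "\<And>x. x \<in> H \<Longrightarrow> g (g x) = x" using P' by blast
  have gadj: "\<And>x. x \<in> H \<Longrightarrow> adj H g x = g x" using P' by blast
  have gr: "\<And>a x. x \<in> H \<Longrightarrow> g (r a x) = r a (g x)" using P' by blast
  have Fg: "\<And>x. x \<in> H \<Longrightarrow> F (g x) = - g (F x)" using P' by blast
  have E: "\<And>j. j < p \<Longrightarrow> bounded_on H (e j) \<and>
        (\<forall>x\<in>H. e j (g x) = - g (e j x)) \<and>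
        (\<forall>x\<in>H. adj H (e j) x = - e j x) \<and>
        (\<forall>x\<in>H. e j (e j x) = - x) \<and>
        (\<forall>i<p. i \<noteq> j \<longrightarrow> (\<forall>x\<in>H. e i (e j x) + e j (e i x) = 0)) \<and>
        (\<forall>x\<in>H. e j (F x) = F (e j x)) \<and>
        (\<forall>a. \<forall>x\<in>H. e j (r a x) = r a (e j x))" using P' by blast
  have rb: "\<And>a. bounded_on H (r a)" using R' by blast
  have rH: "\<And>a x. x \<in> H \<Longrightarrow> r a x \<in> H" using bounded_onD(1)[OF H rb] .
  have FH: "\<And>x. x \<in> H \<Longrightarrow> F x \<in> H" using bounded_onD(1)[OF H Fb] .
  have gH: "\<And>x. x \<in> H \<Longrightarrow> g x \<in> H" using bounded_onD(1)[OF H gb] .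
  define H' where "H' = Hy H"
  have H': "closed_subspace H'" unfolding H'_def by (rule Hy_closed[OF H])
  have swH: "\<And>T x. bounded_on H T \<Longrightarrow> x \<in> H' \<Longrightarrow> sw T x \<in> H'"
    unfolding H'_def using sw_maps[OF H] by blast
  have c_rep: "representation scC st H' (\<lambda>a. sw (r a))"
    unfolding representation_iff
  proof (intro conjI allI ballI)
    fix a show "bounded_on H' (sw (r a))" unfolding H'_def by (rule sw_bounded_on[OF H rb])
  next
    fix a b x assume x: "x \<in> H'"
    show "sw (r (a + b)) x = sw (r a) x + sw (r b) x"
      unfolding sw_plus_op[symmetric] by (rule sw_cong[where H=H]) (use R' x H'_def in auto)
  next
    fix c a x assume x: "x \<in> H'"
    have "sw (r (scC c a)) x = sw (\<lambda>y. csc c (r a y)) x"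
      by (rule sw_cong[where H=H]) (use R' x H'_def in auto)
    also have "\<dots> = csc c (sw (r a) x)"
      by (rule sw_general_eq[where F="sw (\<lambda>y. csc c (r a y))" and G="\<lambda>x. csc c (sw (r a) x)"])
         (simp_all only: evens_sw odds_sw evens_csc odds_csc)
    finally show "sw (r (scC c a)) x = csc c (sw (r a) x)" .
  next
    fix a b x assume x: "x \<in> H'"
    show "sw (r (a * b)) x = sw (r a) (sw (r b) x)"
      unfolding sw_comp by (rule sw_cong[where H=H]) (use R' x H'_def in auto)
  next
    fix a x assume x: "x \<in> H'"
    have "adj H' (sw (r a)) x = sw (r (st a)) x" unfolding H'_def
      by (rule sw_adj[OF H rb rb _ x[unfolded H'_def]]) (use R' in auto)
    thus "sw (r (st a)) x = adj H' (sw (r a)) x" by simp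
  qed
  have c1: "\<forall>a. compact_on H' (\<lambda>x. sw F (sw F (sw (r a) x)) - sw (r a) x)"
  proof
    fix a show "compact_on H' (\<lambda>x. sw F (sw F (sw (r a) x)) - sw (r a) x)"
    proof (rule compact_zero[OF H'])
      fix x assume x: "x \<in> H'"
      have "sw F (sw F (sw (r a) x)) = sw (r a) x" unfolding sw_comp
        by (rule sw_cong[where H=H]) (use x H'_def dF2 rH F_def H_def r_def in auto)
      thus "sw F (sw F (sw (r a) x)) - sw (r a) x = 0" by simp
    qed
  qed
  have Fadj': "\<And>y. y \<in> H' \<Longrightarrow> adj H' (sw F) y = sw F y"
    unfolding H'_def by (rule sw_adj[OF H Fb Fb]) (use dFadj F_def H_def in auto)
  have c2: "\<forall>a. compact_on H' (\<lambda>x. sw F (sw (r a) x) - adj H' (sw F) (sw (r a) x))"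
  proof
    fix a show "compact_on H' (\<lambda>x. sw F (sw (r a) x) - adj H' (sw F) (sw (r a) x))"
    proof (rule compact_zero[OF H'])
      fix x assume x: "x \<in> H'"
      show "sw F (sw (r a) x) - adj H' (sw F) (sw (r a) x) = 0"
        using Fadj'[OF swH[OF rb x]] by simp
    qed
  qed
  have c3: "\<forall>a. compact_on H' (\<lambda>x. sw F (sw (r a) x) - sw (r a) (sw F x))"
  proof
    fix a show "compact_on H' (\<lambda>x. sw F (sw (r a) x) - sw (r a) (sw F x))"
    proof (rule compact_zero[OF H'])
      fix x assume x: "x \<in> H'"
      have "sw F (sw (r a) x) = sw (r a) (sw F x)" unfolding sw_comp
        by (rule sw_cong[where H=H]) (use x H'_def dFr F_def H_def r_def in auto)
      thus "sw F (sw (r a) x) - sw (r a) (sw F x) = 0" by simp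
    qed
  qed
  have cg2: "\<forall>x\<in>H'. sw g (sw g x) = x"
  proof
    fix x assume x: "x \<in> H'"
    have "sw g (sw g x) = sw (\<lambda>y. y) x" unfolding sw_comp
      by (rule sw_cong[where H=H]) (use x H'_def g2 in auto)
    thus "sw g (sw g x) = x" by (simp only: sw_id)
  qed
  have cgadj: "\<forall>x\<in>H'. adj H' (sw g) x = sw g x"
    unfolding H'_def by (intro ballI sw_adj[OF H gb gb]) (use gadj in auto)
  have cgr: "\<forall>a. \<forall>x\<in>H'. sw g (sw (r a) x) = sw (r a) (sw g x)"
    unfolding sw_comp by (intro allI ballI sw_cong[where H=H]) (use H'_def gr in auto)
  have cFg: "\<forall>x\<in>H'. sw F (sw g x) = - sw g (sw F x)"
    unfolding sw_comp sw_neg_op[symmetric] by (intro allI ballI sw_cong[where H=H]) (use H'_def Fg in auto)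
  have cE: "\<forall>j<p. bounded_on H' (sw (e j)) \<and>
        (\<forall>x\<in>H'. sw (e j) (sw g x) = - sw g (sw (e j) x)) \<and>
        (\<forall>x\<in>H'. adj H' (sw (e j)) x = - sw (e j) x) \<and>
        (\<forall>x\<in>H'. sw (e j) (sw (e j) x) = - x) \<and>
        (\<forall>i<p. i \<noteq> j \<longrightarrow> (\<forall>x\<in>H'. sw (e i) (sw (e j) x) + sw (e j) (sw (e i) x) = 0)) \<and>
        (\<forall>x\<in>H'. sw (e j) (sw F x) = sw F (sw (e j) x)) \<and>
        (\<forall>a. \<forall>x\<in>H'. sw (e j) (sw (r a) x) = sw (r a) (sw (e j) x))"
  proof (rule allI, rule impI, intro conjI)
    fix j assume j: "j < p"
    note Ej = E[OF j]
    have eb: "bounded_on H (e j)" using Ej by blast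
    show "bounded_on H' (sw (e j))" unfolding H'_def by (rule sw_bounded_on[OF H eb])
    show "\<forall>x\<in>H'. sw (e j) (sw g x) = - sw g (sw (e j) x)"
      unfolding sw_comp sw_neg_op[symmetric] by (intro allI ballI sw_cong[where H=H]) (use H'_def Ej in auto)
    show "\<forall>x\<in>H'. adj H' (sw (e j)) x = - sw (e j) x"
    proof
      fix x assume x: "x \<in> H'"
      have "adj H' (sw (e j)) x = sw (\<lambda>y. - e j y) x" unfolding H'_def
        by (rule sw_adj[OF H eb bounded_on_neg[OF H eb] _ x[unfolded H'_def]]) (use Ej in auto)
      thus "adj H' (sw (e j)) x = - sw (e j) x" by (simp only: sw_neg_op)
    qed
    show "\<forall>x\<in>H'. sw (e j) (sw (e j) x) = - x"
    proof
      fix x assume x: "x \<in> H'"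
      have "sw (e j) (sw (e j) x) = sw (\<lambda>y. - y) x" unfolding sw_comp
        by (rule sw_cong[where H=H]) (use x H'_def Ej in auto)
      thus "sw (e j) (sw (e j) x) = - x" by (simp only: sw_neg_op sw_id)
    qed
    show "\<forall>i<p. i \<noteq> j \<longrightarrow> (\<forall>x\<in>H'. sw (e i) (sw (e j) x) + sw (e j) (sw (e i) x) = 0)"
    proof (intro allI impI ballI)
      fix i x assume i: "i < p" "i \<noteq> j" and x: "x \<in> H'"
      have "sw (e i) (sw (e j) x) + sw (e j) (sw (e i) x) = sw (\<lambda>y. 0) x"
        unfolding sw_comp sw_plus_op[symmetric] by (rule sw_cong[where H=H]) (use x H'_def Ej i in auto)
      thus "sw (e i) (sw (e j) x) + sw (e j) (sw (e i) x) = 0" by (simp only: sw_zero_op)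
    qed
    show "\<forall>x\<in>H'. sw (e j) (sw F x) = sw F (sw (e j) x)"
      unfolding sw_comp by (intro allI ballI sw_cong[where H=H]) (use H'_def Ej in auto)
    show "\<forall>a. \<forall>x\<in>H'. sw (e j) (sw (r a) x) = sw (r a) (sw (e j) x)"
      unfolding sw_comp by (intro allI ballI sw_cong[where H=H]) (use H'_def Ej in auto)
  qed
  have cF: "bounded_on H' (sw F)" unfolding H'_def by (rule sw_bounded_on[OF H Fb])
  have cg: "bounded_on H' (sw g)" unfolding H'_def by (rule sw_bounded_on[OF H gb])
  show ?thesis unfolding pgraded_fmod_iff swm_sel
    unfolding H_def[symmetric] g_def[symmetric] r_def[symmetric] F_def[symmetric] e_def[symmetric] H'_def[symmetric]
    using H' c_rep cF cg cg2 cgadj cgr cFg c1 c2 c3 cE by (intro conjI) auto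
qed

section \<open>The rotation homotopy\<close>

lemma lin2:
  assumes H: "closed_subspace H" and T: "bounded_on H T" and u: "u \<in> H" and v: "v \<in> H"
  shows "T (csc c u + csc d v) = csc c (T u) + csc d (T v)"
  using bounded_onD(2)[OF H T cs_csc[OF H u] cs_csc[OF H v]] bounded_onD(3)[OF H T u] bounded_onD(3)[OF H T v]
  by simp

lemma bounded_lin:
  assumes H: "closed_subspace H" and A: "bounded_on H A" and B: "bounded_on H B"
  shows "bounded_on H (\<lambda>x. csc c (A x) + csc d (B x))"
proof -
  obtain CA where CA0: "CA \<ge> 0" and CA: "\<forall>x\<in>H. l2norm (A x) \<le> CA * l2norm x" using bounded_onD(4)[OF H A] by blast
  obtain CB where CB0: "CB \<ge> 0" and CB: "\<forall>x\<in>H. l2norm (B x) \<le> CB * l2norm x" using bounded_onD(4)[OF H B] by blast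
  have "\<forall>x\<in>H. csc c (A x) + csc d (B x) \<in> H"
    using bounded_onD(1)[OF H A] bounded_onD(1)[OF H B] by (intro ballI cs_add[OF H] cs_csc[OF H]) auto
  moreover have "\<forall>x\<in>H. \<forall>y\<in>H. csc c (A (x + y)) + csc d (B (x + y)) = (csc c (A x) + csc d (B x)) + (csc c (A y) + csc d (B y))"
    using bounded_onD(2)[OF H A] bounded_onD(2)[OF H B] by (simp add: fun_eq_iff algebra_simps)
  moreover have "\<forall>e. \<forall>x\<in>H. csc c (A (csc e x)) + csc d (B (csc e x)) = csc e (csc c (A x) + csc d (B x))"
    using bounded_onD(3)[OF H A] bounded_onD(3)[OF H B] by (simp add: fun_eq_iff algebra_simps)
  moreover have "\<forall>x\<in>H. l2norm (csc c (A x) + csc d (B x)) \<le> (cmod c * CA + cmod d * CB) * l2norm x"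
  proof
    fix x assume x: "x \<in> H"
    have AL: "A x \<in> L2" and BL: "B x \<in> L2" using bounded_onD(1)[OF H A x] bounded_onD(1)[OF H B x] cs_L2[OF H] by auto
    have "l2norm (csc c (A x) + csc d (B x)) \<le> l2norm (csc c (A x)) + l2norm (csc d (B x))"
      by (rule l2norm_triangle[OF L2_csc[OF AL] L2_csc[OF BL]])
    also have "\<dots> = cmod c * l2norm (A x) + cmod d * l2norm (B x)" by (simp add: l2norm_csc AL BL)
    also have "\<dots> \<le> cmod c * (CA * l2norm x) + cmod d * (CB * l2norm x)"
      using CA CB x by (intro add_mono mult_left_mono) auto
    also have "\<dots> = (cmod c * CA + cmod d * CB) * l2norm x" by (simp add: algebra_simps)
    finally show "l2norm (csc c (A x) + csc d (B x)) \<le> (cmod c * CA + cmod d * CB) * l2norm x" .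
  qed
  ultimately show ?thesis unfolding bounded_on_def by blast
qed

lemma rot_alg:
  fixes a b :: real and p q w :: complex
  assumes ab: "a\<^sup>2 + b\<^sup>2 = 1"
  shows "of_real a * (of_real a * p + of_real b * q) + of_real b * (of_real a * (- q) + of_real b * w) - w
         = of_real (a * a) * (p - w)"
proof -
  have hb: "(of_real b * of_real b :: complex) = 1 - of_real a * of_real a"
  proof -
    have "b * b = 1 - a * a" using ab by (simp add: power2_eq_square)
    hence "(of_real (b * b) :: complex) = of_real (1 - a * a)" by simp
    thus ?thesis by simp
  qed
  have "of_real a * (of_real a * p + of_real b * q) + of_real b * (of_real a * (- q) + of_real b * w) - w
         - of_real (a * a) * (p - w) = (of_real b * of_real b - (1 - of_real a * of_real a)) * w"
    by (simp add: algebra_simps)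
  also have "\<dots> = 0" using hb by simp
  finally show ?thesis by simp
qed

lemma pgraded_rot:
  fixes a b :: real
  assumes P: "pgraded_fmod scC st p m"
    and Eb: "bounded_on (Hs m) E"
    and Eadj: "\<forall>x\<in>Hs m. adj (Hs m) E x = E x"
    and E2: "\<forall>x\<in>Hs m. E (E x) = x"
    and Eg: "\<forall>x\<in>Hs m. E (gam m x) = - gam m (E x)"
    and Er: "\<forall>a. \<forall>x\<in>Hs m. E (rho m a x) = rho m a (E x)"
    and Ee: "\<forall>j<p. \<forall>x\<in>Hs m. E (eps m j x) = eps m j (E x)"
    and EF: "\<forall>x\<in>Hs m. E (Fop m x) = - Fop m (E x)"
    and ab: "a\<^sup>2 + b\<^sup>2 = 1"
  shows "pgraded_fmod scC st p (m\<lparr>Fop := (\<lambda>x. csc (of_real a) (Fop m x) + csc (of_real b) (E x))\<rparr>)"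
proof -
  define H where "H = Hs m"
  define g where "g = gam m"
  define r where "r = rho m"
  define F where "F = Fop m"
  define e where "e = eps m"
  define G where "G = (\<lambda>x. csc (of_real a) (F x) + csc (of_real b) (E x))"
  note P' = P[unfolded pgraded_fmod_iff, folded H_def g_def r_def F_def e_def]
  have H: "closed_subspace H" using P' by blast
  have R: "representation scC st H r" using P' by blast
  note R' = R[unfolded representation_iff]
  have Fb: "bounded_on H F" using P' by blast
  have gb: "bounded_on H g" using P' by blast
  have Fg: "\<And>x. x \<in> H \<Longrightarrow> F (g x) = - g (F x)" using P' by blast
  have K1: "\<And>a'. compact_on H (\<lambda>x. F (F (r a' x)) - r a' x)" using P' by blast
  have K2: "\<And>a'. compact_on H (\<lambda>x. F (r a' x) - adj H F (r a' x))" using P' by blast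
  have K3: "\<And>a'. compact_on H (\<lambda>x. F (r a' x) - r a' (F x))" using P' by blast
  have Eps: "\<And>j. j < p \<Longrightarrow> bounded_on H (e j) \<and>
        (\<forall>x\<in>H. e j (g x) = - g (e j x)) \<and>
        (\<forall>x\<in>H. adj H (e j) x = - e j x) \<and>
        (\<forall>x\<in>H. e j (e j x) = - x) \<and>
        (\<forall>i<p. i \<noteq> j \<longrightarrow> (\<forall>x\<in>H. e i (e j x) + e j (e i x) = 0)) \<and>
        (\<forall>x\<in>H. e j (F x) = F (e j x)) \<and>
        (\<forall>a. \<forall>x\<in>H. e j (r a x) = r a (e j x))" using P' by blast
  have Eb': "bounded_on H E" using Eb H_def by simp
  have Eadj': "\<And>x. x \<in> H \<Longrightarrow> adj H E x = E x" using Eadj H_def by simp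
  have E2': "\<And>x. x \<in> H \<Longrightarrow> E (E x) = x" using E2 H_def by simp
  have Eg': "\<And>x. x \<in> H \<Longrightarrow> E (g x) = - g (E x)" using Eg H_def g_def by simp
  have Er': "\<And>a' x. x \<in> H \<Longrightarrow> E (r a' x) = r a' (E x)" using Er H_def r_def by simp
  have Ee': "\<And>j x. j < p \<Longrightarrow> x \<in> H \<Longrightarrow> E (e j x) = e j (E x)" using Ee H_def e_def by simp
  have EF': "\<And>x. x \<in> H \<Longrightarrow> E (F x) = - F (E x)" using EF H_def F_def by simp
  have rb: "\<And>a'. bounded_on H (r a')" using R' by blast
  have rH: "\<And>a' x. x \<in> H \<Longrightarrow> r a' x \<in> H" using bounded_onD(1)[OF H rb] .
  have FH: "\<And>x. x \<in> H \<Longrightarrow> F x \<in> H" using bounded_onD(1)[OF H Fb] .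
  have EH: "\<And>x. x \<in> H \<Longrightarrow> E x \<in> H" using bounded_onD(1)[OF H Eb'] .
  have HL: "\<And>x. x \<in> H \<Longrightarrow> x \<in> L2" using cs_L2[OF H] .
  have Gapp: "\<And>y. G y = csc (of_real a) (F y) + csc (of_real b) (E y)" unfolding G_def ..
  have Gb: "bounded_on H G" unfolding G_def by (rule bounded_lin[OF H Fb Eb'])
  have GH: "\<And>x. x \<in> H \<Longrightarrow> G x \<in> H" using bounded_onD(1)[OF H Gb] .
  have lin: "\<And>T u v c d. bounded_on H T \<Longrightarrow> u \<in> H \<Longrightarrow> v \<in> H \<Longrightarrow> T (csc c u + csc d v) = csc c (T u) + csc d (T v)"
    using lin2[OF H] by blast
  have GgI: "\<forall>x\<in>H. G (g x) = - g (G x)"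
  proof
    fix x assume x: "x \<in> H"
    have "g (G x) = csc (of_real a) (g (F x)) + csc (of_real b) (g (E x))"
      unfolding G_def by (rule lin[OF gb FH[OF x] EH[OF x]])
    note gG = fun_cong[OF this]
    show "G (g x) = - g (G x)"
    proof (rule ext)
      fix n
      have 1: "G (g x) n = of_real a * (- g (F x) n) + of_real b * (- g (E x) n)"
        unfolding G_def Fg[OF x] Eg'[OF x] by simp
      have 2: "g (G x) n = of_real a * g (F x) n + of_real b * g (E x) n" using gG[of n] by simp
      show "G (g x) n = (- g (G x)) n" unfolding uminus_fun_apply' 1 2 by (simp add: algebra_simps)
    qed
  qed
  have k1: "\<forall>a'. compact_on H (\<lambda>x. G (G (r a' x)) - r a' x)"
  proof
    fix a' show "compact_on H (\<lambda>x. G (G (r a' x)) - r a' x)"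
    proof (rule compact_scale[OF H K1[of a'], where c="of_real (a * a)"])
      fix x assume x: "x \<in> H"
      show "F (F (r a' x)) - r a' x \<in> L2" by (rule L2_diff[OF HL[OF FH[OF FH[OF rH[OF x]]]] HL[OF rH[OF x]]])
      define u where "u = r a' x"
      have u: "u \<in> H" unfolding u_def using rH[OF x] .
      have fg: "F (G u) = csc (of_real a) (F (F u)) + csc (of_real b) (F (E u))"
        unfolding G_def by (rule lin[OF Fb FH[OF u] EH[OF u]])
      have eg: "E (G u) = csc (of_real a) (E (F u)) + csc (of_real b) (E (E u))"
        unfolding G_def by (rule lin[OF Eb' FH[OF u] EH[OF u]])
      have GG: "G (G u) = csc (of_real a) (F (G u)) + csc (of_real b) (E (G u))" by (rule Gapp)
      have "G (G u) - u = csc (of_real (a * a)) (F (F u) - u)"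
      proof (rule ext)
        fix n
        have "(G (G u) - u) n = of_real a * (of_real a * F (F u) n + of_real b * F (E u) n)
            + of_real b * (of_real a * (- F (E u) n) + of_real b * u n) - u n"
          unfolding minus_fun_apply' GG fg eg EF'[OF u] E2'[OF u] by simp
        also have "\<dots> = of_real (a * a) * (F (F u) n - u n)" by (rule rot_alg[OF ab])
        finally show "(G (G u) - u) n = csc (of_real (a * a)) (F (F u) - u) n" by simp
      qed
      thus "G (G (r a' x)) - r a' x = csc (of_real (a * a)) (F (F (r a' x)) - r a' x)" unfolding u_def .
    qed
  qed
  have adjG: "\<And>y. y \<in> H \<Longrightarrow> adj H G y = csc (of_real a) (adj H F y) + csc (of_real b) (E y)"
  proof -
    fix y assume y: "y \<in> H"
    have aF: "adj H F y \<in> H" "\<forall>x\<in>H. l2inner (F x) y = l2inner x (adj H F y)"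
      using adj_exists[OF H Fb y] by auto
    show "adj H G y = csc (of_real a) (adj H F y) + csc (of_real b) (E y)"
    proof (rule adj_eqI[OF H])
      show "csc (of_real a) (adj H F y) + csc (of_real b) (E y) \<in> H"
        using aF EH[OF y] by (intro cs_add[OF H] cs_csc[OF H]) auto
      fix x assume x: "x \<in> H"
      have EE: "l2inner (E x) y = l2inner x (E y)" by (rule adj_prop(1)[OF H Eb' Eadj' x y])
      have L: "F x \<in> L2" "E x \<in> L2" "y \<in> L2" "x \<in> L2" "adj H F y \<in> L2" "E y \<in> L2"
        using FH EH HL x y aF by auto
      show "l2inner (G x) y = l2inner x (csc (of_real a) (adj H F y) + csc (of_real b) (E y))"
        unfolding G_def using L aF(2) x EE
        by (simp add: inner_add_left inner_add_right inner_csc_left inner_csc_right L2_csc)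
    qed
  qed
  have k2: "\<forall>a'. compact_on H (\<lambda>x. G (r a' x) - adj H G (r a' x))"
  proof
    fix a' show "compact_on H (\<lambda>x. G (r a' x) - adj H G (r a' x))"
    proof (rule compact_scale[OF H K2[of a'], where c="of_real a"])
      fix x assume x: "x \<in> H"
      have aF: "adj H F (r a' x) \<in> H" using adj_exists[OF H Fb rH[OF x]] by auto
      show "F (r a' x) - adj H F (r a' x) \<in> L2" by (rule L2_diff[OF HL[OF FH[OF rH[OF x]]] HL[OF aF]])
      show "G (r a' x) - adj H G (r a' x) = csc (of_real a) (F (r a' x) - adj H F (r a' x))"
        unfolding adjG[OF rH[OF x]] unfolding Gapp by (rule ext) (simp add: algebra_simps)
    qed
  qed
  have k3: "\<forall>a'. compact_on H (\<lambda>x. G (r a' x) - r a' (G x))"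
  proof
    fix a' show "compact_on H (\<lambda>x. G (r a' x) - r a' (G x))"
    proof (rule compact_scale[OF H K3[of a'], where c="of_real a"])
      fix x assume x: "x \<in> H"
      show "F (r a' x) - r a' (F x) \<in> L2" by (rule L2_diff[OF HL[OF FH[OF rH[OF x]]] HL[OF rH[OF FH[OF x]]]])
      have "r a' (G x) = csc (of_real a) (r a' (F x)) + csc (of_real b) (r a' (E x))"
        unfolding G_def by (rule lin[OF rb FH[OF x] EH[OF x]])
      note rG = fun_cong[OF this]
      show "G (r a' x) - r a' (G x) = csc (of_real a) (F (r a' x) - r a' (F x))"
      proof (rule ext)
        fix n
        have 1: "G (r a' x) n = of_real a * F (r a' x) n + of_real b * r a' (E x) n"
          unfolding G_def Er'[OF x] by simp
        have 2: "r a' (G x) n = of_real a * r a' (F x) n + of_real b * r a' (E x) n" using rG[of n] by simp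
        show "(G (r a' x) - r a' (G x)) n = csc (of_real a) (F (r a' x) - r a' (F x)) n"
          unfolding minus_fun_apply' 1 2 by (simp add: algebra_simps)
      qed
    qed
  qed
  have eG: "\<And>j x. j < p \<Longrightarrow> x \<in> H \<Longrightarrow> e j (G x) = G (e j x)"
  proof -
    fix j x assume j: "j < p" and x: "x \<in> H"
    have eb: "bounded_on H (e j)" using Eps[OF j] by blast
    have "e j (G x) = csc (of_real a) (e j (F x)) + csc (of_real b) (e j (E x))"
      unfolding G_def by (rule lin[OF eb FH[OF x] EH[OF x]])
    moreover have "e j (F x) = F (e j x)" using Eps[OF j] x by blast
    ultimately show "e j (G x) = G (e j x)" unfolding Gapp Ee'[OF j x] by simp
  qed
  have Gdef: "(\<lambda>x. csc (of_real a) (Fop m x) + csc (of_real b) (E x)) = G" unfolding G_def F_def ..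
  have g2: "\<forall>x\<in>H. g (g x) = x" using P' by blast
  have gadj: "\<forall>x\<in>H. adj H g x = g x" using P' by blast
  have gr: "\<forall>a. \<forall>x\<in>H. g (r a x) = r a (g x)" using P' by blast
  have cE: "\<forall>j<p. bounded_on H (e j) \<and>
        (\<forall>x\<in>H. e j (g x) = - g (e j x)) \<and>
        (\<forall>x\<in>H. adj H (e j) x = - e j x) \<and>
        (\<forall>x\<in>H. e j (e j x) = - x) \<and>
        (\<forall>i<p. i \<noteq> j \<longrightarrow> (\<forall>x\<in>H. e i (e j x) + e j (e i x) = 0)) \<and>
        (\<forall>x\<in>H. e j (G x) = G (e j x)) \<and>
        (\<forall>a. \<forall>x\<in>H. e j (r a x) = r a (e j x))"
  proof (intro allI impI)
    fix j assume j: "j < p"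
    show "bounded_on H (e j) \<and>
        (\<forall>x\<in>H. e j (g x) = - g (e j x)) \<and>
        (\<forall>x\<in>H. adj H (e j) x = - e j x) \<and>
        (\<forall>x\<in>H. e j (e j x) = - x) \<and>
        (\<forall>i<p. i \<noteq> j \<longrightarrow> (\<forall>x\<in>H. e i (e j x) + e j (e i x) = 0)) \<and>
        (\<forall>x\<in>H. e j (G x) = G (e j x)) \<and>
        (\<forall>a. \<forall>x\<in>H. e j (r a x) = r a (e j x))"
      using Eps[OF j] eG[OF j] by blast
  qed
  have sel: "Hs (m\<lparr>Fop := G\<rparr>) = H" "gam (m\<lparr>Fop := G\<rparr>) = g" "rho (m\<lparr>Fop := G\<rparr>) = r"
    "Fop (m\<lparr>Fop := G\<rparr>) = G" "eps (m\<lparr>Fop := G\<rparr>) = e"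
    by (simp_all add: H_def g_def r_def e_def)
  show ?thesis unfolding pgraded_fmod_iff Gdef sel
    using H R Gb gb g2 gadj gr GgI k1 k2 k3 cE by (intro conjI) assumption+
qed

lemma cos_lip: "\<bar>cos u - cos v\<bar> \<le> \<bar>u - v\<bar>" for u v :: real
proof -
  have "\<bar>cos u - cos v\<bar> = 2 * (\<bar>sin ((u + v) / 2)\<bar> * \<bar>sin ((v - u) / 2)\<bar>)"
    unfolding cos_diff_cos by (simp add: abs_mult)
  also have "\<dots> \<le> 2 * (1 * \<bar>(v - u) / 2\<bar>)"
    by (intro mult_left_mono mult_mono abs_sin_le_one abs_sin_x_le_abs_x) auto
  also have "\<dots> = \<bar>u - v\<bar>" by simp
  finally show ?thesis .
qed

lemma sin_lip: "\<bar>sin u - sin v\<bar> \<le> \<bar>u - v\<bar>" for u v :: real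
proof -
  have "\<bar>sin u - sin v\<bar> = 2 * (\<bar>sin ((u - v) / 2)\<bar> * \<bar>cos ((u + v) / 2)\<bar>)"
    unfolding sin_diff_sin by (simp add: abs_mult)
  also have "\<dots> \<le> 2 * (\<bar>(u - v) / 2\<bar> * 1)"
    by (intro mult_left_mono mult_mono abs_cos_le_one abs_sin_x_le_abs_x) auto
  also have "\<dots> = \<bar>u - v\<bar>" by simp
  finally show ?thesis .
qed

lemma path_cont:
  assumes H: "closed_subspace H" and Fb: "bounded_on H F" and Eb: "bounded_on H E"
    and Fp: "\<And>t. Fp t = (\<lambda>x. csc (of_real (cos (t * pi / 2))) (F x) + csc (of_real (sin (t * pi / 2))) (E x))"
  shows "\<forall>t\<in>{0..1}. \<forall>e>0. \<exists>d>0. \<forall>s\<in>{0..1}. \<bar>s - t\<bar> < d \<longrightarrow>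
           (\<forall>x\<in>H. l2norm (Fp s x - Fp t x) \<le> e * l2norm x)"
proof (intro ballI allI impI)
  fix t e :: real assume e: "e > 0"
  obtain CF where CF0: "CF \<ge> 0" and CF: "\<forall>x\<in>H. l2norm (F x) \<le> CF * l2norm x" using bounded_onD(4)[OF H Fb] by blast
  obtain CE where CE0: "CE \<ge> 0" and CE: "\<forall>x\<in>H. l2norm (E x) \<le> CE * l2norm x" using bounded_onD(4)[OF H Eb] by blast
  define K where "K = (CF + CE) * (pi / 2) + 1"
  have K0: "0 \<le> (CF + CE) * (pi / 2)" using CF0 CE0 by simp
  hence K: "K > 0" unfolding K_def by simp
  define d where "d = e / K"
  have d: "d > 0" unfolding d_def using e K by simp
  have "\<forall>s\<in>{0..1}. \<bar>s - t\<bar> < d \<longrightarrow> (\<forall>x\<in>H. l2norm (Fp s x - Fp t x) \<le> e * l2norm x)"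
  proof (intro ballI impI)
    fix s x assume sd: "\<bar>s - t\<bar> < d" and x: "x \<in> H"
    have FL: "F x \<in> L2" and EL: "E x \<in> L2" using bounded_onD(1)[OF H Fb x] bounded_onD(1)[OF H Eb x] cs_L2[OF H] by auto
    have xn: "0 \<le> l2norm x" using l2norm_nonneg[OF cs_L2[OF H x]] .
    define ca where "ca = cos (s * pi / 2) - cos (t * pi / 2)"
    define sa where "sa = sin (s * pi / 2) - sin (t * pi / 2)"
    have diff: "Fp s x - Fp t x = csc (of_real ca) (F x) + csc (of_real sa) (E x)"
      unfolding Fp ca_def sa_def by (rule ext) (simp add: algebra_simps)
    have arg: "\<bar>s * pi / 2 - t * pi / 2\<bar> = \<bar>s - t\<bar> * (pi / 2)"
    proof -
      have "s * pi / 2 - t * pi / 2 = (s - t) * (pi / 2)" by (simp add: algebra_simps)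
      hence "\<bar>s * pi / 2 - t * pi / 2\<bar> = \<bar>s - t\<bar> * \<bar>pi / 2\<bar>" by (simp only: abs_mult)
      also have "\<bar>pi / 2\<bar> = pi / 2" using pi_gt_zero by simp
      finally show ?thesis .
    qed
    have ca: "\<bar>ca\<bar> \<le> \<bar>s - t\<bar> * (pi / 2)" unfolding ca_def using cos_lip arg by metis
    have sa: "\<bar>sa\<bar> \<le> \<bar>s - t\<bar> * (pi / 2)" unfolding sa_def using sin_lip arg by metis
    have "l2norm (Fp s x - Fp t x) \<le> l2norm (csc (of_real ca) (F x)) + l2norm (csc (of_real sa) (E x))"
      unfolding diff by (rule l2norm_triangle[OF L2_csc[OF FL] L2_csc[OF EL]])
    also have "\<dots> = \<bar>ca\<bar> * l2norm (F x) + \<bar>sa\<bar> * l2norm (E x)" by (simp add: l2norm_csc FL EL)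
    also have "\<dots> \<le> (\<bar>s - t\<bar> * (pi / 2)) * (CF * l2norm x) + (\<bar>s - t\<bar> * (pi / 2)) * (CE * l2norm x)"
      using CF CE x ca sa xn CF0 CE0 l2norm_nonneg[OF FL] l2norm_nonneg[OF EL]
      by (intro add_mono mult_mono) auto
    also have "\<dots> = \<bar>s - t\<bar> * ((CF + CE) * (pi / 2)) * l2norm x" by (simp add: algebra_simps)
    also have "\<dots> \<le> d * K * l2norm x"
    proof (intro mult_right_mono xn mult_mono)
      show "\<bar>s - t\<bar> \<le> d" using sd by simp
      show "(CF + CE) * (pi / 2) \<le> K" unfolding K_def by simp
    qed (use K0 d in auto)
    also have "\<dots> = e * l2norm x" unfolding d_def using K by simp
    finally show "l2norm (Fp s x - Fp t x) \<le> e * l2norm x" .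
  qed
  thus "\<exists>d>0. \<forall>s\<in>{0..1}. \<bar>s - t\<bar> < d \<longrightarrow> (\<forall>x\<in>H. l2norm (Fp s x - Fp t x) \<le> e * l2norm x)"
    using d by blast
qed

theorem mainTheorem1:
  fixes scC :: "complex \<Rightarrow> 'a::{banach,real_normed_algebra} \<Rightarrow> 'a"
    and st :: "'a \<Rightarrow> 'a" and p :: nat and m :: "'a fmod" and E :: op
  assumes "cstar_algebra scC st"
    and "separable_set (UNIV :: 'a set)"
    and "pgraded_fmod scC st p m"
    and "bounded_on (Hs m) E"
    and "\<forall>x\<in>Hs m. adj (Hs m) E x = E x"
    and "\<forall>x\<in>Hs m. E (E x) = x"
    and "\<forall>x\<in>Hs m. E (gam m x) = - gam m (E x)"
    and "\<forall>a. \<forall>x\<in>Hs m. E (rho m a x) = rho m a (E x)"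
    and "\<forall>j<p. \<forall>x\<in>Hs m. E (eps m j x) = eps m j (E x)"
    and "\<forall>x\<in>Hs m. E (Fop m x) = - Fop m (E x)"
  shows "Kclass_zero scC st p m"
proof -
  note P = assms(3)
  have H: "closed_subspace (Hs m)" using P unfolding pgraded_fmod_iff by blast
  have Fb: "bounded_on (Hs m) (Fop m)" using P unfolding pgraded_fmod_iff by blast
  define Fp where "Fp t = (\<lambda>x. csc (of_real (cos (t * pi / 2))) (Fop m x) + csc (of_real (sin (t * pi / 2))) (E x))" for t :: real
  define m' where "m' = m\<lparr>Fop := E\<rparr>"
  have Pt: "pgraded_fmod scC st p (m\<lparr>Fop := Fp t\<rparr>)" for t
    unfolding Fp_def by (rule pgraded_rot[OF assms(3-10)]) (simp add: sin_cos_squared_add2)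
  have E1: "(\<lambda>x. csc (of_real 0) (Fop m x) + csc (of_real 1) (E x)) = E" by (intro ext) simp
  have P': "pgraded_fmod scC st p m'"
    using pgraded_rot[OF assms(3-10), of 0 1] unfolding E1 m'_def by simp
  have hom: "op_homotopic scC st p m m'"
    unfolding op_homotopic_def
  proof (intro conjI exI[of _ Fp])
    show "Hs m = Hs m'" "\<forall>x\<in>Hs m. gam m x = gam m' x" "\<forall>a. \<forall>x\<in>Hs m. rho m a x = rho m' a x"
      "\<forall>j<p. \<forall>x\<in>Hs m. eps m j x = eps m' j x" by (simp_all add: m'_def)
    show "\<forall>t\<in>{0..1}. pgraded_fmod scC st p (m\<lparr>Fop := Fp t\<rparr>)" using Pt by blast
    show "\<forall>x\<in>Hs m. Fp 0 x = Fop m x \<and> Fp 1 x = Fop m' x"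
      by (simp add: Fp_def m'_def fun_eq_iff)
    show "\<forall>t\<in>{0..1}. \<forall>e>0. \<exists>d>0. \<forall>s\<in>{0..1}. \<bar>s - t\<bar> < d \<longrightarrow>
           (\<forall>x\<in>Hs m. l2norm (Fp s x - Fp t x) \<le> e * l2norm x)"
      by (rule path_cont[OF H Fb assms(4)]) (simp add: Fp_def)
  qed
  have K1: "gen m - gen m' \<in> Krel scC st p" by (rule Krel.homot[OF P P' hom])
  define y where "y = swm m'"
  have Py: "pgraded_fmod scC st p y" unfolding y_def
    by (rule pgraded_swm[OF P']) (use assms(5,6,8) in \<open>simp_all add: m'_def\<close>)
  have H': "closed_subspace (Hs m')" using P' unfolding pgraded_fmod_iff by blast
  have "gen (dsum m' y) - gen m' - gen y \<in> Krel scC st p" by (rule Krel.dsum[OF P' Py])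
  moreover have "dsum m' y = y" unfolding y_def by (rule dsum_swm[OF H'])
  ultimately have "gen y - gen m' - gen y \<in> Krel scC st p" by simp
  moreover have "gen y - gen m' - gen y = - gen m'" by (simp add: algebra_simps)
  ultimately have "- gen m' \<in> Krel scC st p" by simp
  hence "- (- gen m') \<in> Krel scC st p" by (rule Krel.neg)
  hence K2: "gen m' \<in> Krel scC st p" by simp
  have "(gen m - gen m') + gen m' \<in> Krel scC st p" by (rule Krel.add[OF K1 K2])
  thus ?thesis unfolding Kclass_zero_def by simp
qed



end
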